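(* Let $T$ be a complete countable theory and suppose the formula $\varphi(\bar x;\bar y)$ has the independence property for $T$. Then there are a countable model $M\models T$ and a sequence $\langle \bar b_n : n<\omega\rangle$ of tuples from $M$ with $\ell(\bar b_n)=\ell(\bar y)$ such that: (i) $\varphi$ has the independence property over this sequence, i.e. for all finite disjoint $A,B\subseteq\omega$, $M\models\exists\bar x\,\big(\bigwedge_{n\in A}\varphi(\bar x,\bar b_n)\wedge\bigwedge_{n\in B}\neg\varphi(\bar x,\bar b_n)\big)$; and (ii) for every $\bar a\in{}^{\ell(\bar x)}M$ there is a truth value $\mathbf{t}\in\{0,1\}$ such that for all but finitely many $n$, $M\models\varphi[\bar a,\bar b_n]^{\mathbf t}$.
   Context: For a formula $\psi$, $\psi^1$ denotes $\psi$ and $\psi^0$ denotes $\neg\psi$. *)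

theory Defs
  imports Main "HOL-Library.Countable" "HOL-Library.Countable_Set"
begin

datatype 'f trm = Var nat | Fn 'f "'f trm list"

datatype ('f, 'r) fm =
    FF
  | Eq "'f trm" "'f trm"
  | Rel 'r "'f trm list"
  | Neg "('f, 'r) fm"
  | Conj "('f, 'r) fm" "('f, 'r) fm"
  | Ex nat "('f, 'r) fm"

fun wf_trm :: "('f \<Rightarrow> nat) \<Rightarrow> 'f trm \<Rightarrow> bool" where
  "wf_trm fa (Var n) = True"
| "wf_trm fa (Fn f ts) = (length ts = fa f \<and> (\<forall>t\<in>set ts. wf_trm fa t))"

fun wf_fm :: "('f \<Rightarrow> nat) \<Rightarrow> ('r \<Rightarrow> nat) \<Rightarrow> ('f, 'r) fm \<Rightarrow> bool" where
  "wf_fm fa ra FF = True"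
| "wf_fm fa ra (Eq s t) = (wf_trm fa s \<and> wf_trm fa t)"
| "wf_fm fa ra (Rel r ts) = (length ts = ra r \<and> (\<forall>t\<in>set ts. wf_trm fa t))"
| "wf_fm fa ra (Neg p) = wf_fm fa ra p"
| "wf_fm fa ra (Conj p q) = (wf_fm fa ra p \<and> wf_fm fa ra q)"
| "wf_fm fa ra (Ex x p) = wf_fm fa ra p"

fun fv_trm :: "'f trm \<Rightarrow> nat set" where
  "fv_trm (Var n) = {n}"
| "fv_trm (Fn f ts) = (\<Union>t\<in>set ts. fv_trm t)"

fun fv :: "('f, 'r) fm \<Rightarrow> nat set" where
  "fv FF = {}"
| "fv (Eq s t) = fv_trm s \<union> fv_trm t"
| "fv (Rel r ts) = (\<Union>t\<in>set ts. fv_trm t)"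
| "fv (Neg p) = fv p"
| "fv (Conj p q) = fv p \<union> fv q"
| "fv (Ex x p) = fv p - {x}"

definition sentence :: "('f \<Rightarrow> nat) \<Rightarrow> ('r \<Rightarrow> nat) \<Rightarrow> ('f, 'r) fm \<Rightarrow> bool" where
  "sentence fa ra p \<longleftrightarrow> wf_fm fa ra p \<and> fv p = {}"

record ('f, 'r, 'a) struct =
  univ :: "'a set"
  fint :: "'f \<Rightarrow> 'a list \<Rightarrow> 'a"
  rint :: "'r \<Rightarrow> 'a list \<Rightarrow> bool"

definition is_struct :: "('f \<Rightarrow> nat) \<Rightarrow> ('f, 'r, 'a) struct \<Rightarrow> bool" where
  "is_struct fa M \<longleftrightarrow> univ M \<noteq> {} \<and>
     (\<forall>f as. length as = fa f \<and> set as \<subseteq> univ M \<longrightarrow> fint M f as \<in> univ M)"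

fun eval :: "('f, 'r, 'a) struct \<Rightarrow> (nat \<Rightarrow> 'a) \<Rightarrow> 'f trm \<Rightarrow> 'a" where
  "eval M e (Var n) = e n"
| "eval M e (Fn f ts) = fint M f (map (eval M e) ts)"

fun sat :: "('f, 'r, 'a) struct \<Rightarrow> (nat \<Rightarrow> 'a) \<Rightarrow> ('f, 'r) fm \<Rightarrow> bool" where
  "sat M e FF = False"
| "sat M e (Eq s t) = (eval M e s = eval M e t)"
| "sat M e (Rel r ts) = rint M r (map (eval M e) ts)"
| "sat M e (Neg p) = (\<not> sat M e p)"
| "sat M e (Conj p q) = (sat M e p \<and> sat M e q)"
| "sat M e (Ex x p) = (\<exists>d\<in>univ M. sat M (e(x := d)) p)"

definition is_model :: "('f \<Rightarrow> nat) \<Rightarrow> ('f, 'r) fm set \<Rightarrow> ('f, 'r, 'a) struct \<Rightarrow> bool" where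
  "is_model fa T M \<longleftrightarrow> is_struct fa M \<and>
     (\<forall>p\<in>T. \<forall>e. range e \<subseteq> univ M \<longrightarrow> sat M e p)"

fun upd_list :: "(nat \<Rightarrow> 'a) \<Rightarrow> nat list \<Rightarrow> 'a list \<Rightarrow> (nat \<Rightarrow> 'a)" where
  "upd_list e (v # vs) (a # as) = (upd_list e vs as)(v := a)"
| "upd_list e _ _ = e"

text \<open>M satisfies phi[a, b], where phi = phi(xs; ys), a is assigned to xs and b to ys
  (the remaining variables, which do not occur free in phi, get some element of M).\<close>
definition holds ::
  "('f, 'r, 'a) struct \<Rightarrow> ('f, 'r) fm \<Rightarrow> nat list \<Rightarrow> nat list \<Rightarrow> 'a list \<Rightarrow> 'a list \<Rightarrow> bool" where
  "holds M p xs ys a b =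
     sat M (upd_list (upd_list (\<lambda>_. SOME d. d \<in> univ M) ys b) xs a) p"

definition fm_pow :: "('f, 'r) fm \<Rightarrow> nat \<Rightarrow> ('f, 'r) fm" where
  "fm_pow p t = (if t = 1 then p else Neg p)"

definition tuple_in :: "('f, 'r, 'a) struct \<Rightarrow> nat \<Rightarrow> 'a list \<Rightarrow> bool" where
  "tuple_in M n a \<longleftrightarrow> length a = n \<and> set a \<subseteq> univ M"

text \<open>phi(xs; ys) has the independence property in M (finitary formulation):
  for every n there are b_0..b_{n-1} such that every subset of {0..n-1} is cut out
  by some a.\<close>
definition has_IP_in ::
  "('f, 'r, 'a) struct \<Rightarrow> ('f, 'r) fm \<Rightarrow> nat list \<Rightarrow> nat list \<Rightarrow> bool" where
  "has_IP_in M p xs ys \<longleftrightarrow>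
     (\<forall>n. \<exists>b :: nat \<Rightarrow> 'a list. (\<forall>i<n. tuple_in M (length ys) (b i)) \<and>
        (\<forall>S \<subseteq> {..<n}. \<exists>a. tuple_in M (length xs) a \<and>
            (\<forall>i<n. holds M p xs ys a (b i) \<longleftrightarrow> i \<in> S)))"

end

theory Submission imports Defs begin

instance trm :: (countable) countable by countable_datatype
instance fm :: (countable, countable) countable by countable_datatype

lemma finite_fv_trm: "finite (fv_trm t)"
  by (induction t) auto

lemma finite_fv: "finite (fv p)"
  by (induction p) (auto simp: finite_fv_trm)

lemma eval_agree: "(\<forall>v\<in>fv_trm t. e v = e' v) \<Longrightarrow> eval M e t = eval M e' t"
proof (induction t)
  case (Var n) then show ?case by simp
next
  case (Fn f ts)
  have eq: "map (eval M e) ts = map (eval M e') ts"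
  proof (rule map_cong[OF refl])
    fix t assume "t \<in> set ts"
    then show "eval M e t = eval M e' t" using Fn by simp
  qed
  show ?case unfolding eval.simps eq ..
qed

lemma sat_agree: "(\<forall>v\<in>fv p. e v = e' v) \<Longrightarrow> sat M e p = sat M e' p"
proof (induction p arbitrary: e e')
  case FF then show ?case by simp
next
  case (Eq s t)
  have "eval M e s = eval M e' s" "eval M e t = eval M e' t" using Eq by (auto intro!: eval_agree)
  then show ?case by simp
next
  case (Rel r ts)
  have "map (eval M e) ts = map (eval M e') ts"
  proof (rule map_cong[OF refl])
    fix t assume "t \<in> set ts"
    then show "eval M e t = eval M e' t" using Rel by (intro eval_agree) auto
  qed
  then show ?case unfolding sat.simps by (rule arg_cong)
next
  case (Neg p) then show ?case by simp
next
  case (Conj p q)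
  have "sat M e p = sat M e' p" "sat M e q = sat M e' q" using Conj.prems by (intro Conj.IH; auto)+
  then show ?case by simp
next
  case (Ex x p)
  have "sat M (e(x := d)) p = sat M (e'(x := d)) p" for d
    using Ex.prems by (intro Ex.IH) auto
  then show ?case by simp
qed
lemma upd_list_notin: "v \<notin> set vs \<Longrightarrow> upd_list e vs as v = e v"
  by (induction e vs as rule: upd_list.induct) auto

lemma upd_list_in: "length vs = length as \<Longrightarrow> v \<in> set vs \<Longrightarrow> upd_list e vs as v = upd_list e' vs as v"
  by (induction e vs as rule: upd_list.induct) auto

lemma upd_list_comp: "f (upd_list e vs as v) = upd_list (\<lambda>w. f (e w)) vs (map f as) v"
  by (induction e vs as rule: upd_list.induct) auto

lemma holds_indep:
  assumes "length a = length xs" "length b = length ys" "fv p \<subseteq> set xs \<union> set ys"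
  shows "sat M (upd_list (upd_list e ys b) xs a) p = sat M (upd_list (upd_list e' ys b) xs a) p"
proof (rule sat_agree, intro ballI)
  fix v assume "v \<in> fv p"
  show "upd_list (upd_list e ys b) xs a v = upd_list (upd_list e' ys b) xs a v"
  proof (cases "v \<in> set xs")
    case True then show ?thesis using assms upd_list_in by metis
  next
    case False
    then have v: "v \<in> set ys" using assms \<open>v \<in> fv p\<close> by auto
    show ?thesis using False upd_list_notin[OF False] upd_list_in[OF assms(2)[symmetric] v] by metis
  qed
qed

section \<open>Ultrafilters on nat\<close>

definition isF :: "nat set set \<Rightarrow> bool" where
  "isF F \<longleftrightarrow> (\<forall>X. finite (- X) \<longrightarrow> X \<in> F) \<and> {} \<notin> F \<and> (\<forall>X\<in>F. \<forall>Y\<in>F. X \<inter> Y \<in> F)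
     \<and> (\<forall>X\<in>F. \<forall>Y. X \<subseteq> Y \<longrightarrow> Y \<in> F)"

definition ultra :: "nat set set \<Rightarrow> bool" where
  "ultra U \<longleftrightarrow> isF U \<and> (\<forall>X. X \<in> U \<or> - X \<in> U)"

lemma isF_D:
  assumes "isF F"
  shows "finite (- X) \<Longrightarrow> X \<in> F" "{} \<notin> F" "X \<in> F \<Longrightarrow> Y \<in> F \<Longrightarrow> X \<inter> Y \<in> F"
    "X \<in> F \<Longrightarrow> X \<subseteq> Y \<Longrightarrow> Y \<in> F"
  using assms unfolding isF_def by simp_all

lemma ex_ultra: "\<exists>U. ultra U"
proof -
  let ?A = "{F. isF F}"
  let ?F0 = "{X :: nat set. finite (- X)}"
  have F0: "isF ?F0"
    unfolding isF_def
  proof (intro conjI allI impI ballI)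
    show "{} \<notin> ?F0" by simp
  next
    fix X Y assume "X \<in> ?F0" "Y \<in> ?F0" then show "X \<inter> Y \<in> ?F0" by (simp add: Compl_Int)
  next
    fix X Y assume "X \<in> ?F0" "X \<subseteq> Y" then show "Y \<in> ?F0"
      by (metis Compl_subset_Compl_iff finite_subset mem_Collect_eq)
  qed simp
  have "\<forall>C\<in>chains ?A. \<exists>U\<in>?A. \<forall>X\<in>C. X \<subseteq> U"
  proof
    fix C assume C: "C \<in> chains ?A"
    show "\<exists>U\<in>?A. \<forall>X\<in>C. X \<subseteq> U"
    proof (cases "C = {}")
      case True then show ?thesis using F0 by blast
    next
      case False
      have "isF (\<Union>C)"
        unfolding isF_def
      proof (intro conjI allI impI ballI)
        fix X :: "nat set" assume "finite (- X)"
        obtain F where "F \<in> C" using False by blast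
        then have "isF F" using C by (auto simp: chains_def)
        then show "X \<in> \<Union>C" using \<open>F \<in> C\<close> \<open>finite (- X)\<close> by (blast dest: isF_D)
      next
        show "{} \<notin> \<Union>C"
        proof
          assume "{} \<in> \<Union>C"
          then obtain F where "F \<in> C" "{} \<in> F" by blast
          then have "isF F" using C by (auto simp: chains_def)
          then show False using \<open>{} \<in> F\<close> by (blast dest: isF_D)
        qed
      next
        fix X Y assume "X \<in> \<Union>C" "Y \<in> \<Union>C"
        then obtain F G where "F \<in> C" "G \<in> C" "X \<in> F" "Y \<in> G" by auto
        have FG: "F \<subseteq> G \<or> G \<subseteq> F" using C \<open>F \<in> C\<close> \<open>G \<in> C\<close> by (auto simp: chains_def chain_subset_def)
        have iF: "isF F" "isF G" using C \<open>F \<in> C\<close> \<open>G \<in> C\<close> by (auto simp: chains_def)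
        show "X \<inter> Y \<in> \<Union>C"
        proof (cases "F \<subseteq> G")
          case True
          then have "X \<inter> Y \<in> G" using isF_D(3)[OF iF(2)] \<open>X \<in> F\<close> \<open>Y \<in> G\<close> by blast
          then show ?thesis using \<open>G \<in> C\<close> by blast
        next
          case False
          then have "X \<inter> Y \<in> F" using FG isF_D(3)[OF iF(1)] \<open>X \<in> F\<close> \<open>Y \<in> G\<close> by blast
          then show ?thesis using \<open>F \<in> C\<close> by blast
        qed
      next
        fix X Y assume "X \<in> \<Union>C" "X \<subseteq> Y"
        then obtain F where "F \<in> C" "X \<in> F" by blast
        then have "isF F" using C by (auto simp: chains_def)
        then have "Y \<in> F" using \<open>X \<in> F\<close> \<open>X \<subseteq> Y\<close> by (blast dest: isF_D)
        then show "Y \<in> \<Union>C" using \<open>F \<in> C\<close> by blast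
      qed
      then show ?thesis by blast
    qed
  qed
  from Zorn_Lemma2[OF this] obtain M where "M \<in> ?A" and mx: "\<forall>X\<in>?A. M \<subseteq> X \<longrightarrow> X = M"
    by (elim bexE) 
  then have M: "isF M" by simp
  have Mcof: "\<And>X. finite (- X) \<Longrightarrow> X \<in> M" and Mne: "{} \<notin> M"
    and Mint: "\<And>X Y. X \<in> M \<Longrightarrow> Y \<in> M \<Longrightarrow> X \<inter> Y \<in> M"
    and Mup: "\<And>X Y. X \<in> M \<Longrightarrow> X \<subseteq> Y \<Longrightarrow> Y \<in> M" using isF_D[OF M] by simp_all
  have max: "\<And>X. isF X \<Longrightarrow> M \<subseteq> X \<Longrightarrow> X = M" using mx by simp
  have "X \<in> M \<or> - X \<in> M" for X
  proof (rule ccontr)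
    assume n: "\<not> (X \<in> M \<or> - X \<in> M)"
    let ?M' = "{Y. \<exists>Z\<in>M. Z \<inter> X \<subseteq> Y}"
    have sub: "M \<subseteq> ?M'" by auto
    have "isF ?M'"
      unfolding isF_def
    proof (intro conjI allI impI ballI)
      fix Y :: "nat set" assume "finite (- Y)" then show "Y \<in> ?M'" using Mcof sub by blast
    next
      show "{} \<notin> ?M'"
      proof
        assume "{} \<in> ?M'"
        then obtain Z where "Z \<in> M" "Z \<inter> X \<subseteq> {}" by auto
        then have "Z \<subseteq> - X" by blast
        then have "- X \<in> M" using Mup \<open>Z \<in> M\<close> by blast
        then show False using n by blast
      qed
    next
      fix Y1 Y2 assume "Y1 \<in> ?M'" "Y2 \<in> ?M'"
      then obtain Z1 Z2 where "Z1 \<in> M" "Z2 \<in> M" "Z1 \<inter> X \<subseteq> Y1" "Z2 \<inter> X \<subseteq> Y2" by auto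
      then have "Z1 \<inter> Z2 \<in> M" "(Z1 \<inter> Z2) \<inter> X \<subseteq> Y1 \<inter> Y2" using Mint by auto
      then show "Y1 \<inter> Y2 \<in> ?M'" by blast
    next
      fix Y1 Y2 assume "Y1 \<in> ?M'" "Y1 \<subseteq> Y2" then show "Y2 \<in> ?M'" by blast
    qed
    then have "?M' = M" using max sub by blast
    moreover have "UNIV \<in> M" using Mcof by simp
    then have "X \<in> ?M'" by blast
    ultimately show False using n by blast
  qed
  then show ?thesis using M unfolding ultra_def by blast
qed


definition pat :: "('f, 'r, 'a) struct \<Rightarrow> ('f, 'r) fm \<Rightarrow> nat list \<Rightarrow> nat list \<Rightarrow> ('a list \<times> bool) set \<Rightarrow> bool" where
  "pat M p xs ys Z \<longleftrightarrow> (\<exists>a. tuple_in M (length xs) a \<and> (\<forall>(t, \<delta>)\<in>Z. holds M p xs ys a t = \<delta>))"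

lemma upd_list_P: "(\<forall>v. P (e v)) \<Longrightarrow> \<forall>x\<in>set as. P x \<Longrightarrow> P (upd_list e vs as v)"
  by (induction e vs as rule: upd_list.induct) auto

section \<open>Ultrapower\<close>

locale UP =
  fixes U :: "nat set set" and fa :: "'f \<Rightarrow> nat" and K :: "('f, 'r, 'a) struct"
  assumes U: "ultra U" and K: "is_struct fa K"
begin

lemma U_isF: "isF U" using U unfolding ultra_def by simp
lemma U_UNIV: "UNIV \<in> U" using isF_D(1)[OF U_isF, of UNIV] by simp
lemma U_empty: "{} \<notin> U" using isF_D(2)[OF U_isF] .
lemma U_Int: "X \<in> U \<Longrightarrow> Y \<in> U \<Longrightarrow> X \<inter> Y \<in> U" using isF_D(3)[OF U_isF] .
lemma U_mono: "X \<in> U \<Longrightarrow> X \<subseteq> Y \<Longrightarrow> Y \<in> U" using isF_D(4)[OF U_isF] .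
lemma U_cofin: "finite (- X) \<Longrightarrow> X \<in> U" using isF_D(1)[OF U_isF] .
lemma U_Int_iff: "X \<inter> Y \<in> U \<longleftrightarrow> X \<in> U \<and> Y \<in> U"
  using U_Int U_mono by (meson Int_lower1 Int_lower2)
lemma U_Compl: "- X \<in> U \<longleftrightarrow> X \<notin> U"
proof
  assume "- X \<in> U" show "X \<notin> U"
  proof
    assume "X \<in> U" then have "X \<inter> - X \<in> U" using U_Int \<open>- X \<in> U\<close> by blast
    then show False using U_empty by simp
  qed
next
  assume "X \<notin> U" then show "- X \<in> U" using U unfolding ultra_def by blast
qed
lemma U_Collect_not: "{j. \<not> P j} \<in> U \<longleftrightarrow> {j. P j} \<notin> U"
  using U_Compl[of "{j. P j}"] by (simp add: Compl_eq)

lemma U_finite_Int: "finite I \<Longrightarrow> (\<forall>i\<in>I. {j. P i j} \<in> U) \<Longrightarrow> {j. \<forall>i\<in>I. P i j} \<in> U"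
proof (induction I rule: finite_induct)
  case empty then show ?case using U_UNIV by simp
next
  case (insert x F)
  have "{j. \<forall>i\<in>insert x F. P i j} = {j. P x j} \<inter> {j. \<forall>i\<in>F. P i j}" by auto
  then show ?case using insert U_Int by simp
qed

lemma U_cong: "G \<in> U \<Longrightarrow> (\<And>j. j \<in> G \<Longrightarrow> P j \<longleftrightarrow> Q j) \<Longrightarrow> {j. P j} \<in> U \<longleftrightarrow> {j. Q j} \<in> U"
proof -
  assume G: "G \<in> U" and eq: "\<And>j. j \<in> G \<Longrightarrow> P j \<longleftrightarrow> Q j"
  have "{j. P j} \<inter> G = {j. Q j} \<inter> G" using eq by auto
  then show ?thesis using G U_Int_iff by metis
qed

lemma U_cong_imp: "G \<in> U \<Longrightarrow> (\<And>j. j \<in> G \<Longrightarrow> P j \<Longrightarrow> Q j) \<Longrightarrow> {j. P j} \<in> U \<Longrightarrow> {j. Q j} \<in> U"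
proof -
  assume G: "G \<in> U" and imp: "\<And>j. j \<in> G \<Longrightarrow> P j \<Longrightarrow> Q j" and P: "{j. P j} \<in> U"
  have "{j. P j} \<inter> G \<subseteq> {j. Q j}" using imp by auto
  then show ?thesis using U_Int[OF P G] U_mono by blast
qed

lemma U_infinite: "finite X \<Longrightarrow> - X \<in> U"
  by (rule U_cofin) simp

lemma K_ne: "\<exists>dK. dK \<in> univ K" using K unfolding is_struct_def by auto
lemma K_cl: "length as = fa F \<Longrightarrow> set as \<subseteq> univ K \<Longrightarrow> fint K F as \<in> univ K"
  using K unfolding is_struct_def by simp

definition rel :: "(nat \<Rightarrow> 'a) \<Rightarrow> (nat \<Rightarrow> 'a) \<Rightarrow> bool" where
  "rel f g \<longleftrightarrow> {j. f j = g j} \<in> U"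

definition rep :: "(nat \<Rightarrow> 'a) \<Rightarrow> (nat \<Rightarrow> 'a)" where
  "rep f = (SOME g. rel g f)"

definition isrep :: "(nat \<Rightarrow> 'a) \<Rightarrow> bool" where
  "isrep x \<longleftrightarrow> rep x = x"

definition KS :: "('f, 'r, nat \<Rightarrow> 'a) struct" where
  "KS = \<lparr>univ = rep ` {f. \<forall>j. f j \<in> univ K},
         fint = (\<lambda>F as. rep (\<lambda>j. fint K F (map (\<lambda>a. a j) as))),
         rint = (\<lambda>R as. {j. rint K R (map (\<lambda>a. a j) as)} \<in> U)\<rparr>"

lemma rel_refl: "rel f f" unfolding rel_def using U_UNIV by simp
lemma rel_sym: "rel f g \<Longrightarrow> rel g f" unfolding rel_def by (simp add: eq_commute)
lemma rel_trans: "rel f g \<Longrightarrow> rel g h \<Longrightarrow> rel f h"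
  unfolding rel_def by (erule U_cong_imp) auto

lemma rep_rel: "rel (rep f) f"
  unfolding rep_def by (rule someI[of _ f]) (rule rel_refl)

lemma rep_cong: "rel f g \<Longrightarrow> rep f = rep g"
proof -
  assume fg: "rel f g"
  have "(\<lambda>h. rel h f) = (\<lambda>h. rel h g)"
    using fg rel_trans rel_sym by (intro ext iffI) blast+
  then show ?thesis unfolding rep_def by simp
qed

lemma rep_rep: "rep (rep f) = rep f" using rep_cong[OF rep_rel] .
lemma isrep_rep: "isrep (rep f)" unfolding isrep_def by (rule rep_rep)

lemma isrep_eq: "isrep a \<Longrightarrow> isrep b \<Longrightarrow> a = b \<longleftrightarrow> rel a b"
  unfolding isrep_def using rep_cong rel_refl by metis

lemma univ_KS: "univ KS = rep ` {f. \<forall>j. f j \<in> univ K}" unfolding KS_def by simp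
lemma fint_KS: "fint KS F as = rep (\<lambda>j. fint K F (map (\<lambda>a. a j) as))" unfolding KS_def by simp
lemma rint_KS: "rint KS R as = ({j. rint K R (map (\<lambda>a. a j) as)} \<in> U)" unfolding KS_def by simp

lemma univ_KS_isrep: "x \<in> univ KS \<Longrightarrow> isrep x"
  unfolding univ_KS using isrep_rep by auto

lemma univ_KS_ae: "x \<in> univ KS \<Longrightarrow> {j. x j \<in> univ K} \<in> U"
proof -
  assume "x \<in> univ KS"
  then obtain f where f: "\<forall>j. f j \<in> univ K" "x = rep f" unfolding univ_KS by auto
  have "rel x f" using f rep_rel by simp
  moreover have "{j. x j = f j} \<subseteq> {j. x j \<in> univ K}" using f by auto
  ultimately show ?thesis unfolding rel_def using U_mono by blast
qed

lemma in_univ_KS: "{j. x j \<in> univ K} \<in> U \<Longrightarrow> rep x \<in> univ KS"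
proof -
  assume ae: "{j. x j \<in> univ K} \<in> U"
  obtain dK where dK: "dK \<in> univ K" using K_ne by blast
  define f where "f j = (if x j \<in> univ K then x j else dK)" for j
  have "{j. x j \<in> univ K} \<subseteq> {j. f j = x j}" by (auto simp: f_def)
  then have "rel f x" unfolding rel_def using U_mono ae by blast
  then have "rep x = rep f" using rep_cong rel_sym by metis
  moreover have "\<forall>j. f j \<in> univ K" using dK by (simp add: f_def)
  ultimately show ?thesis unfolding univ_KS by blast
qed

lemma eval_isrep: "(\<forall>v. isrep (e v)) \<Longrightarrow> isrep (eval KS e t)"
  by (cases t) (auto simp: fint_KS isrep_rep)

lemma U_list: "(\<forall>t\<in>set ts. {j. P t j} \<in> U) \<Longrightarrow> {j. \<forall>t\<in>set ts. P t j} \<in> U"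
  using U_finite_Int[of "set ts" P] by simp

lemma eval_los: "rel (eval KS e t) (\<lambda>j. eval K (\<lambda>v. e v j) t)"
proof (induction t)
  case (Var n) then show ?case by (simp add: rel_refl)
next
  case (Fn F ts)
  have G: "{j. \<forall>t\<in>set ts. eval KS e t j = eval K (\<lambda>v. e v j) t} \<in> U"
    using Fn unfolding rel_def by (intro U_list) auto
  have sub: "{j. \<forall>t\<in>set ts. eval KS e t j = eval K (\<lambda>v. e v j) t} \<subseteq>
      {j. fint K F (map (\<lambda>a. a j) (map (eval KS e) ts)) = eval K (\<lambda>v. e v j) (Fn F ts)}"
  proof
    fix j assume "j \<in> {j. \<forall>t\<in>set ts. eval KS e t j = eval K (\<lambda>v. e v j) t}"
    then have "map (\<lambda>a. a j) (map (eval KS e) ts) = map (eval K (\<lambda>v. e v j)) ts"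
      by (simp add: map_eq_conv)
    then show "j \<in> {j. fint K F (map (\<lambda>a. a j) (map (eval KS e) ts)) = eval K (\<lambda>v. e v j) (Fn F ts)}"
      unfolding eval.simps mem_Collect_eq by (rule arg_cong)
  qed
  have "rel (\<lambda>j. fint K F (map (\<lambda>a. a j) (map (eval KS e) ts))) (\<lambda>j. eval K (\<lambda>v. e v j) (Fn F ts))"
    unfolding rel_def using U_mono[OF G sub] .
  then have "rel (rep (\<lambda>j. fint K F (map (\<lambda>a. a j) (map (eval KS e) ts)))) (\<lambda>j. eval K (\<lambda>v. e v j) (Fn F ts))"
    using rep_rel rel_trans by blast
  then show ?case by (simp add: fint_KS)
qed

lemma upd_proj: "(\<lambda>v. (e(x := d)) v j) = (\<lambda>v. e v j)(x := d j)"
  by auto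

lemma sat_los: "(\<forall>v. isrep (e v)) \<Longrightarrow> sat KS e p \<longleftrightarrow> {j. sat K (\<lambda>v. e v j) p} \<in> U"
proof (induction p arbitrary: e)
  case FF then show ?case using U_empty by simp
next
  case (Eq s t)
  have "sat KS e (Eq s t) \<longleftrightarrow> rel (eval KS e s) (eval KS e t)"
    using isrep_eq eval_isrep Eq.prems by simp
  also have "\<dots> \<longleftrightarrow> {j. eval K (\<lambda>v. e v j) s = eval K (\<lambda>v. e v j) t} \<in> U"
    unfolding rel_def
  proof (rule U_cong)
    show "{j. eval KS e s j = eval K (\<lambda>v. e v j) s} \<inter> {j. eval KS e t j = eval K (\<lambda>v. e v j) t} \<in> U"
      using eval_los[of e s] eval_los[of e t] U_Int unfolding rel_def by blast
  qed auto
  finally show ?case by simp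
next
  case (Rel R ts)
  have G: "{j. \<forall>t\<in>set ts. eval KS e t j = eval K (\<lambda>v. e v j) t} \<in> U"
    using eval_los unfolding rel_def by (intro U_list) auto
  have "sat KS e (Rel R ts) \<longleftrightarrow> {j. rint K R (map (\<lambda>a. a j) (map (eval KS e) ts))} \<in> U"
    by (simp add: rint_KS)
  also have "\<dots> \<longleftrightarrow> {j. rint K R (map (eval K (\<lambda>v. e v j)) ts)} \<in> U"
  proof (rule U_cong[OF G])
    fix j assume "j \<in> {j. \<forall>t\<in>set ts. eval KS e t j = eval K (\<lambda>v. e v j) t}"
    then have "map (\<lambda>a. a j) (map (eval KS e) ts) = map (eval K (\<lambda>v. e v j)) ts"
      by (simp add: map_eq_conv)
    then show "rint K R (map (\<lambda>a. a j) (map (eval KS e) ts)) = rint K R (map (eval K (\<lambda>v. e v j)) ts)" by (rule arg_cong)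
  qed
  finally show ?case by simp
next
  case (Neg p)
  then show ?case using U_Collect_not[of "\<lambda>j. sat K (\<lambda>v. e v j) p"] by simp
next
  case (Conj p q)
  have "{j. sat K (\<lambda>v. e v j) (Conj p q)} = {j. sat K (\<lambda>v. e v j) p} \<inter> {j. sat K (\<lambda>v. e v j) q}" by auto
  then show ?case using Conj U_Int_iff by simp
next
  case (Ex x p)
  have IH: "sat KS (e(x := d)) p \<longleftrightarrow> {j. sat K ((\<lambda>v. e v j)(x := d j)) p} \<in> U" if d: "d \<in> univ KS" for d
  proof -
    have "\<forall>v. isrep ((e(x := d)) v)" using Ex.prems univ_KS_isrep[OF d] by simp
    from Ex.IH[OF this] show ?thesis by (simp only: upd_proj)
  qed
  show ?case
  proof
    assume "sat KS e (Ex x p)"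
    then obtain d where d: "d \<in> univ KS" "sat KS (e(x := d)) p" by auto
    then have s: "{j. sat K ((\<lambda>v. e v j)(x := d j)) p} \<in> U" using IH by blast
    have "{j. d j \<in> univ K} \<inter> {j. sat K ((\<lambda>v. e v j)(x := d j)) p} \<subseteq> {j. \<exists>d\<in>univ K. sat K ((\<lambda>v. e v j)(x := d)) p}"
      by blast
    then have "{j. \<exists>d\<in>univ K. sat K ((\<lambda>v. e v j)(x := d)) p} \<in> U"
      using U_mono[OF U_Int[OF univ_KS_ae[OF d(1)] s]] by blast
    then show "{j. sat K (\<lambda>v. e v j) (Ex x p)} \<in> U" by simp
  next
    assume "{j. sat K (\<lambda>v. e v j) (Ex x p)} \<in> U"
    then have A: "{j. \<exists>d\<in>univ K. sat K ((\<lambda>v. e v j)(x := d)) p} \<in> U" by simp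
    obtain dK where dK: "dK \<in> univ K" using K_ne by blast
    define f where "f j = (if \<exists>d\<in>univ K. sat K ((\<lambda>v. e v j)(x := d)) p
        then SOME d. d \<in> univ K \<and> sat K ((\<lambda>v. e v j)(x := d)) p else dK)" for j
    have fK: "f j \<in> univ K \<and> ((\<exists>d\<in>univ K. sat K ((\<lambda>v. e v j)(x := d)) p) \<longrightarrow> sat K ((\<lambda>v. e v j)(x := f j)) p)" for j
    proof (cases "\<exists>d\<in>univ K. sat K ((\<lambda>v. e v j)(x := d)) p")
      case True
      then have "\<exists>d. d \<in> univ K \<and> sat K ((\<lambda>v. e v j)(x := d)) p" by blast
      from someI_ex[OF this] True show ?thesis unfolding f_def by simp
    next
      case False then show ?thesis unfolding f_def using dK by simp
    qed
    have fs: "{j. \<exists>d\<in>univ K. sat K ((\<lambda>v. e v j)(x := d)) p} \<inter> {j. rep f j = f j}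
       \<subseteq> {j. sat K ((\<lambda>v. e v j)(x := rep f j)) p}"
    proof (rule subsetI)
      fix j assume "j \<in> {j. \<exists>d\<in>univ K. sat K ((\<lambda>v. e v j)(x := d)) p} \<inter> {j. rep f j = f j}"
      then have h: "\<exists>d\<in>univ K. sat K ((\<lambda>v. e v j)(x := d)) p" "rep f j = f j" by auto
      from fK[of j] h show "j \<in> {j. sat K ((\<lambda>v. e v j)(x := rep f j)) p}" by simp
    qed
    have "\<forall>j. f j \<in> univ K" using fK by blast
    then have d: "rep f \<in> univ KS" unfolding univ_KS by blast
    have r: "rel (rep f) f" by (rule rep_rel)
    have "{j. sat K ((\<lambda>v. e v j)(x := rep f j)) p} \<in> U"
      using U_mono[OF U_Int[OF A r[unfolded rel_def]] fs] .
    then have "sat KS (e(x := rep f)) p" using IH d by blast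
    then show "sat KS e (Ex x p)" using d by auto
  qed
qed


lemma KS_struct: "is_struct fa KS"
  unfolding is_struct_def
proof (intro conjI allI impI)
  obtain dK where dK: "dK \<in> univ K" using K_ne by blast
  have "rep (\<lambda>j. dK) \<in> univ KS" unfolding univ_KS using dK by (intro imageI) simp
  then show "univ KS \<noteq> {}" by blast
next
  fix F as assume as: "length as = fa F \<and> set as \<subseteq> univ KS"
  have G: "{j. \<forall>a\<in>set as. a j \<in> univ K} \<in> U"
    using as univ_KS_ae by (intro U_list) auto
  have "{j. \<forall>a\<in>set as. a j \<in> univ K} \<subseteq> {j. fint K F (map (\<lambda>a. a j) as) \<in> univ K}"
  proof
    fix j assume "j \<in> {j. \<forall>a\<in>set as. a j \<in> univ K}"
    then have "length (map (\<lambda>a. a j) as) = fa F \<and> set (map (\<lambda>a. a j) as) \<subseteq> univ K" using as by auto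
    then show "j \<in> {j. fint K F (map (\<lambda>a. a j) as) \<in> univ K}" using K_cl by blast
  qed
  then have "{j. fint K F (map (\<lambda>a. a j) as) \<in> univ K} \<in> U" by (rule U_mono[OF G])
  then show "fint KS F as \<in> univ KS" unfolding fint_KS by (rule in_univ_KS)
qed

lemma KS_model:
  assumes "is_model fa T K" "\<forall>\<sigma>\<in>T. sentence fa ra \<sigma>"
  shows "is_model fa T KS"
  unfolding is_model_def
proof (intro conjI ballI allI impI)
  show "is_struct fa KS" by (rule KS_struct)
next
  fix \<sigma> and e :: "nat \<Rightarrow> nat \<Rightarrow> 'a" assume s: "\<sigma> \<in> T" and e: "range e \<subseteq> univ KS"
  obtain dK where dK: "dK \<in> univ K" using K_ne by blast
  have fv: "fv \<sigma> = {}" using assms(2) s unfolding sentence_def by blast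
  have "\<forall>p\<in>T. \<forall>e. range e \<subseteq> univ K \<longrightarrow> sat K e p" using assms(1) by (simp add: is_model_def)
  then have "range (\<lambda>_::nat. dK) \<subseteq> univ K \<longrightarrow> sat K (\<lambda>_. dK) \<sigma>" using s by blast
  then have "sat K (\<lambda>_. dK) \<sigma>" using dK by simp
  then have "sat K (\<lambda>v. e v j) \<sigma>" for j using sat_agree[of \<sigma> "\<lambda>v. e v j" "\<lambda>_. dK" K] fv by simp
  then have "{j. sat K (\<lambda>v. e v j) \<sigma>} \<in> U" using U_UNIV by simp
  moreover have "\<forall>v. isrep (e v)" using e univ_KS_isrep by blast
  ultimately show "sat KS e \<sigma>" using sat_los by blast
qed

definition tup :: "nat \<Rightarrow> (nat \<Rightarrow> 'a list) \<Rightarrow> (nat \<Rightarrow> 'a) list" where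
  "tup m y = map (\<lambda>l. rep (\<lambda>j. y j ! l)) [0..<m]"

lemma tup_len[simp]: "length (tup m y) = m" unfolding tup_def by simp

lemma tup_ae: assumes "\<forall>j. length (y j) = m" shows "{j. map (\<lambda>a. a j) (tup m y) = y j} \<in> U"
proof -
  have "{j. \<forall>l\<in>{..<m}. rep (\<lambda>j. y j ! l) j = y j ! l} \<in> U"
    using rep_rel unfolding rel_def by (intro U_finite_Int) auto
  moreover have "{j. \<forall>l\<in>{..<m}. rep (\<lambda>j. y j ! l) j = y j ! l} \<subseteq> {j. map (\<lambda>a. a j) (tup m y) = y j}"
  proof
    fix j assume "j \<in> {j. \<forall>l\<in>{..<m}. rep (\<lambda>j. y j ! l) j = y j ! l}"
    then have "\<forall>l<m. rep (\<lambda>j. y j ! l) j = y j ! l" by auto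
    then have "map (\<lambda>a. a j) (tup m y) = y j" using assms unfolding tup_def
      by (intro nth_equalityI) auto
    then show "j \<in> {j. map (\<lambda>a. a j) (tup m y) = y j}" by simp
  qed
  ultimately show ?thesis using U_mono by blast
qed

lemma tup_in: assumes "\<forall>j. tuple_in K m (y j)" shows "tuple_in KS m (tup m y)"
proof -
  have "rep (\<lambda>j. y j ! l) \<in> univ KS" if "l < m" for l
  proof -
    have "y j ! l \<in> univ K" for j
    proof -
      have "length (y j) = m" "set (y j) \<subseteq> univ K" using assms unfolding tuple_in_def by auto
      then show ?thesis using that nth_mem by (metis subsetD)
    qed
    then have "{j. y j ! l \<in> univ K} \<in> U" using U_UNIV by simp
    then show ?thesis by (rule in_univ_KS)
  qed
  then show ?thesis unfolding tuple_in_def tup_def by auto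
qed

lemma tuple_ae: assumes "tuple_in KS m a" shows "{j. tuple_in K m (map (\<lambda>x. x j) a)} \<in> U"
proof -
  have "{j. \<forall>x\<in>set a. x j \<in> univ K} \<in> U"
    using assms univ_KS_ae unfolding tuple_in_def by (intro U_list) auto
  moreover have "{j. \<forall>x\<in>set a. x j \<in> univ K} \<subseteq> {j. tuple_in K m (map (\<lambda>x. x j) a)}"
    using assms unfolding tuple_in_def by auto
  ultimately show ?thesis using U_mono by blast
qed

lemma holds_los:
  assumes a: "tuple_in KS (length xs) a" and b: "tuple_in KS (length ys) b"
    and fv: "fv p \<subseteq> set xs \<union> set ys"
  shows "holds KS p xs ys a b \<longleftrightarrow> {j. holds K p xs ys (map (\<lambda>x. x j) a) (map (\<lambda>x. x j) b)} \<in> U"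
proof -
  define d where "d = (\<lambda>_::nat. SOME d. d \<in> univ KS)"
  define E where "E = upd_list (upd_list d ys b) xs a"
  have dU: "d v \<in> univ KS" for v
  proof -
    have "univ KS \<noteq> {}" using KS_struct by (simp add: is_struct_def)
    then have "\<exists>d. d \<in> univ KS" by blast
    then show ?thesis unfolding d_def by (rule someI_ex)
  qed
  have aU: "\<forall>x\<in>set a. x \<in> univ KS" and bU: "\<forall>x\<in>set b. x \<in> univ KS"
    using a b unfolding tuple_in_def by auto
  have E1: "\<forall>v. upd_list d ys b v \<in> univ KS"
    using upd_list_P[where P="\<lambda>x. x \<in> univ KS", OF _ bU] dU by blast
  have "E v \<in> univ KS" for v
    unfolding E_def using upd_list_P[where P="\<lambda>x. x \<in> univ KS", OF E1 aU] by blast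
  then have rep: "\<forall>v. isrep (E v)" using univ_KS_isrep by blast
  have "holds KS p xs ys a b = sat KS E p" unfolding holds_def E_def d_def ..
  also have "\<dots> \<longleftrightarrow> {j. sat K (\<lambda>v. E v j) p} \<in> U" using sat_los[OF rep] .
  also have "{j. sat K (\<lambda>v. E v j) p} = {j. holds K p xs ys (map (\<lambda>x. x j) a) (map (\<lambda>x. x j) b)}"
  proof (rule Collect_cong)
    fix j
    have pj: "(\<lambda>v. E v j) = upd_list (upd_list (\<lambda>v. d v j) ys (map (\<lambda>x. x j) b)) xs (map (\<lambda>x. x j) a)"
    proof
      fix v
      have "E v j = upd_list (\<lambda>w. upd_list d ys b w j) xs (map (\<lambda>x. x j) a) v"
        unfolding E_def using upd_list_comp[where f="\<lambda>x. x j" and e="upd_list d ys b" and vs=xs and as=a and v=v] by simp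
      also have "(\<lambda>w. upd_list d ys b w j) = upd_list (\<lambda>v. d v j) ys (map (\<lambda>x. x j) b)"
      proof
        fix w show "upd_list d ys b w j = upd_list (\<lambda>v. d v j) ys (map (\<lambda>x. x j) b) w"
          using upd_list_comp[where f="\<lambda>x. x j" and e=d and vs=ys and as=b and v=w] by simp
      qed
      finally show "E v j = upd_list (upd_list (\<lambda>v. d v j) ys (map (\<lambda>x. x j) b)) xs (map (\<lambda>x. x j) a) v" .
    qed
    have la: "length (map (\<lambda>x. x j) a) = length xs" and lb: "length (map (\<lambda>x. x j) b) = length ys"
      using a b unfolding tuple_in_def by auto
    show "sat K (\<lambda>v. E v j) p = holds K p xs ys (map (\<lambda>x. x j) a) (map (\<lambda>x. x j) b)"
      unfolding pj holds_def by (rule holds_indep[OF la lb fv])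
  qed
  finally show ?thesis .
qed

lemma U_const: "{j. \<delta>} \<in> U \<longleftrightarrow> \<delta>"
  using U_UNIV U_empty by (cases \<delta>) auto

lemma U_eq_bool: "{j. P j = \<delta>} \<in> U \<longleftrightarrow> ({j. P j} \<in> U) = \<delta>"
  using U_Collect_not[of P] by (cases \<delta>) auto

definition pzj :: "nat \<Rightarrow> ((nat \<Rightarrow> 'a) list \<times> bool) set \<Rightarrow> ('a list \<times> bool) set" where
  "pzj j Z = (\<lambda>(t, \<delta>). (map (\<lambda>x. x j) t, \<delta>)) ` Z"

lemma pat_los:
  assumes fv: "fv p \<subseteq> set xs \<union> set ys" and Zf: "finite Z"
    and Zt: "\<forall>(t, \<delta>)\<in>Z. tuple_in KS (length ys) t"
  shows "pat KS p xs ys Z \<longleftrightarrow> {j. pat K p xs ys (pzj j Z)} \<in> U"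
proof
  assume "pat KS p xs ys Z"
  then obtain a where a: "tuple_in KS (length xs) a" and ha: "\<forall>(t, \<delta>)\<in>Z. holds KS p xs ys a t = \<delta>"
    unfolding pat_def by blast
  have "\<forall>z\<in>Z. {j. holds K p xs ys (map (\<lambda>x. x j) a) (map (\<lambda>x. x j) (fst z)) = snd z} \<in> U"
  proof
    fix z assume z: "z \<in> Z"
    obtain t \<delta> where tz: "z = (t, \<delta>)" by fastforce
    have t: "tuple_in KS (length ys) t" using Zt z tz by auto
    have "holds KS p xs ys a t = \<delta>" using ha z tz by auto
    then show "{j. holds K p xs ys (map (\<lambda>x. x j) a) (map (\<lambda>x. x j) (fst z)) = snd z} \<in> U"
      unfolding tz fst_conv snd_conv U_eq_bool using holds_los[OF a t fv] by simp
  qed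
  then have G1: "{j. \<forall>z\<in>Z. holds K p xs ys (map (\<lambda>x. x j) a) (map (\<lambda>x. x j) (fst z)) = snd z} \<in> U"
    by (rule U_finite_Int[OF Zf])
  have G2: "{j. tuple_in K (length xs) (map (\<lambda>x. x j) a)} \<in> U" by (rule tuple_ae[OF a])
  have "{j. \<forall>z\<in>Z. holds K p xs ys (map (\<lambda>x. x j) a) (map (\<lambda>x. x j) (fst z)) = snd z}
      \<inter> {j. tuple_in K (length xs) (map (\<lambda>x. x j) a)} \<subseteq> {j. pat K p xs ys (pzj j Z)}"
  proof
    fix j assume j: "j \<in> {j. \<forall>z\<in>Z. holds K p xs ys (map (\<lambda>x. x j) a) (map (\<lambda>x. x j) (fst z)) = snd z}
      \<inter> {j. tuple_in K (length xs) (map (\<lambda>x. x j) a)}"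
    have "\<forall>(t, \<delta>)\<in>pzj j Z. holds K p xs ys (map (\<lambda>x. x j) a) t = \<delta>"
      using j unfolding pzj_def by auto
    then show "j \<in> {j. pat K p xs ys (pzj j Z)}" using j unfolding pat_def by blast
  qed
  then show "{j. pat K p xs ys (pzj j Z)} \<in> U" using U_mono[OF U_Int[OF G1 G2]] by blast
next
  assume A: "{j. pat K p xs ys (pzj j Z)} \<in> U"
  obtain dK where dK: "dK \<in> univ K" using K_ne by blast
  define aj where "aj j = (if pat K p xs ys (pzj j Z)
     then SOME a. tuple_in K (length xs) a \<and> (\<forall>(t, \<delta>)\<in>pzj j Z. holds K p xs ys a t = \<delta>)
     else replicate (length xs) dK)" for j
  have ajp: "tuple_in K (length xs) (aj j) \<and> (pat K p xs ys (pzj j Z) \<longrightarrow> (\<forall>(t, \<delta>)\<in>pzj j Z. holds K p xs ys (aj j) t = \<delta>))" for j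
  proof (cases "pat K p xs ys (pzj j Z)")
    case True
    then have "\<exists>a. tuple_in K (length xs) a \<and> (\<forall>(t, \<delta>)\<in>pzj j Z. holds K p xs ys a t = \<delta>)"
      unfolding pat_def by blast
    from someI_ex[OF this] True show ?thesis unfolding aj_def by simp
  next
    case False
    have "set (replicate (length xs) dK) \<subseteq> univ K" using dK by (induction xs) auto
    then show ?thesis unfolding aj_def tuple_in_def using False by simp
  qed
  define a where "a = tup (length xs) aj"
  have a: "tuple_in KS (length xs) a" unfolding a_def using ajp by (intro tup_in) blast
  have len: "\<forall>j. length (aj j) = length xs" using ajp unfolding tuple_in_def by blast
  have G: "{j. pat K p xs ys (pzj j Z)} \<inter> {j. map (\<lambda>x. x j) a = aj j} \<in> U"
    using U_Int[OF A tup_ae[OF len]] unfolding a_def .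
  have "holds KS p xs ys a t = \<delta>" if tz: "(t, \<delta>) \<in> Z" for t \<delta>
  proof -
    have t: "tuple_in KS (length ys) t" using Zt tz by auto
    have "{j. holds K p xs ys (map (\<lambda>x. x j) a) (map (\<lambda>x. x j) t)} \<in> U \<longleftrightarrow> {j. \<delta>} \<in> U"
    proof (rule U_cong[OF G])
      fix j assume j: "j \<in> {j. pat K p xs ys (pzj j Z)} \<inter> {j. map (\<lambda>x. x j) a = aj j}"
      have "(map (\<lambda>x. x j) t, \<delta>) \<in> pzj j Z" unfolding pzj_def using tz by force
      then show "holds K p xs ys (map (\<lambda>x. x j) a) (map (\<lambda>x. x j) t) \<longleftrightarrow> \<delta>"
        using ajp[of j] j by auto
    qed
    then show ?thesis using holds_los[OF a t fv] U_const by simp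
  qed
  then show "pat KS p xs ys Z" unfolding pat_def using a by blast
qed

lemma saturation:
  fixes Q :: "nat \<Rightarrow> (nat \<Rightarrow> 'a) list \<Rightarrow> bool" and QK :: "nat \<Rightarrow> nat \<Rightarrow> 'a list \<Rightarrow> bool"
  assumes los: "\<And>k y. tuple_in KS m y \<Longrightarrow> (Q k y \<longleftrightarrow> {j. QK k j (map (\<lambda>x. x j) y)} \<in> U)"
    and fs: "\<And>n. \<exists>y. tuple_in KS m y \<and> (\<forall>k<n. Q k y)"
  shows "\<exists>y. tuple_in KS m y \<and> (\<forall>k. Q k y)"
proof -
  define A where "A n = {j. \<exists>y'. tuple_in K m y' \<and> (\<forall>k<n. QK k j y')}" for n
  have AU: "A n \<in> U" for n
  proof -
    obtain y where y: "tuple_in KS m y" "\<forall>k<n. Q k y" using fs by blast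
    have G1: "{j. tuple_in K m (map (\<lambda>x. x j) y)} \<in> U" by (rule tuple_ae[OF y(1)])
    have "\<forall>k\<in>{..<n}. {j. QK k j (map (\<lambda>x. x j) y)} \<in> U" using y los by blast
    then have G2: "{j. \<forall>k\<in>{..<n}. QK k j (map (\<lambda>x. x j) y)} \<in> U" by (rule U_finite_Int[OF finite_lessThan])
    have "{j. tuple_in K m (map (\<lambda>x. x j) y)} \<inter> {j. \<forall>k\<in>{..<n}. QK k j (map (\<lambda>x. x j) y)} \<subseteq> A n"
      unfolding A_def by auto
    then show ?thesis using U_mono[OF U_Int[OF G1 G2]] by blast
  qed
  obtain dK where dK: "dK \<in> univ K" using K_ne by blast
  have rep: "tuple_in K m (replicate m dK)" unfolding tuple_in_def using dK by (induction m) auto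
  have A0: "j \<in> A 0" for j unfolding A_def using rep by blast
  define mj where "mj j = (GREATEST n. n \<le> j \<and> j \<in> A n)" for j
  have mj1: "mj j \<le> j \<and> j \<in> A (mj j)" for j
    unfolding mj_def by (rule GreatestI_nat[of _ 0 j]) (use A0 in auto)
  have mj2: "n \<le> j \<Longrightarrow> j \<in> A n \<Longrightarrow> n \<le> mj j" for n j
    unfolding mj_def by (rule Greatest_le_nat[of _ n j]) auto
  define yj where "yj j = (SOME y'. tuple_in K m y' \<and> (\<forall>k<mj j. QK k j y'))" for j
  have yjp: "tuple_in K m (yj j) \<and> (\<forall>k<mj j. QK k j (yj j))" for j
  proof -
    have "\<exists>y'. tuple_in K m y' \<and> (\<forall>k<mj j. QK k j y')" using mj1[of j] unfolding A_def by blast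
    from someI_ex[OF this] show ?thesis unfolding yj_def .
  qed
  define y where "y = tup m yj"
  have yin: "tuple_in KS m y" unfolding y_def using yjp by (intro tup_in) blast
  have len: "\<forall>j. length (yj j) = m" using yjp unfolding tuple_in_def by blast
  have "Q k y" for k
  proof -
    have G: "{j. map (\<lambda>x. x j) y = yj j} \<inter> (A (Suc k) \<inter> - {..<Suc k}) \<in> U"
      using U_Int[OF tup_ae[OF len] U_Int[OF AU U_infinite[OF finite_lessThan]]] unfolding y_def .
    have "{j. map (\<lambda>x. x j) y = yj j} \<inter> (A (Suc k) \<inter> - {..<Suc k}) \<subseteq> {j. QK k j (map (\<lambda>x. x j) y)}"
    proof
      fix j assume j: "j \<in> {j. map (\<lambda>x. x j) y = yj j} \<inter> (A (Suc k) \<inter> - {..<Suc k})"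
      then have "Suc k \<le> mj j" using mj2[of "Suc k" j] by auto
      then have "QK k j (yj j)" using yjp[of j] by auto
      then show "j \<in> {j. QK k j (map (\<lambda>x. x j) y)}" using j by auto
    qed
    then have "{j. QK k j (map (\<lambda>x. x j) y)} \<in> U" using U_mono[OF G] by blast
    then show ?thesis using los[OF yin] by blast
  qed
  then show ?thesis using yin by blast
qed

end


lemma replicate_tuple: "d \<in> univ M \<Longrightarrow> tuple_in M n (replicate n d)"
  unfolding tuple_in_def by (induction n) auto

locale MAIN = UP U fa K for U :: "nat set set" and fa :: "'f::countable \<Rightarrow> nat" and K :: "('f, 'r::countable, 'a) struct" +
  fixes \<phi> :: "('f, 'r) fm" and xs ys :: "nat list"
  assumes fvphi: "fv \<phi> \<subseteq> set xs \<union> set ys" and IPK: "has_IP_in K \<phi> xs ys"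
begin

definition dK0 :: 'a where "dK0 = (SOME d. d \<in> univ K)"
lemma dK0: "dK0 \<in> univ K" unfolding dK0_def using K_ne by (rule someI_ex)

definition bK :: "nat \<Rightarrow> nat \<Rightarrow> 'a list" where
  "bK n = (SOME b. (\<forall>i<n. tuple_in K (length ys) (b i)) \<and>
        (\<forall>S \<subseteq> {..<n}. \<exists>a. tuple_in K (length xs) a \<and>
            (\<forall>i<n. holds K \<phi> xs ys a (b i) \<longleftrightarrow> i \<in> S)))"

lemma bK: "(\<forall>i<n. tuple_in K (length ys) (bK n i)) \<and>
        (\<forall>S \<subseteq> {..<n}. \<exists>a. tuple_in K (length xs) a \<and>
            (\<forall>i<n. holds K \<phi> xs ys a (bK n i) \<longleftrightarrow> i \<in> S))"
proof -
  have "\<exists>b. (\<forall>i<n. tuple_in K (length ys) (b i)) \<and>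
        (\<forall>S \<subseteq> {..<n}. \<exists>a. tuple_in K (length xs) a \<and>
            (\<forall>i<n. holds K \<phi> xs ys a (b i) \<longleftrightarrow> i \<in> S))"
    using IPK unfolding has_IP_in_def by blast
  from someI_ex[OF this] show ?thesis unfolding bK_def .
qed

definition bK' :: "nat \<Rightarrow> nat \<Rightarrow> 'a list" where
  "bK' k i = (if i < k then bK k i else replicate (length ys) dK0)"

lemma bK'_tuple: "tuple_in K (length ys) (bK' k i)"
  unfolding bK'_def using bK replicate_tuple[OF dK0] by auto

definition c :: "nat \<Rightarrow> (nat \<Rightarrow> 'a) list" where
  "c i = tup (length ys) (\<lambda>k. bK' k i)"

lemma c_tuple: "tuple_in KS (length ys) (c i)"
  unfolding c_def using bK'_tuple by (intro tup_in) blast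

definition cZ :: "nat set \<Rightarrow> nat set \<Rightarrow> ((nat \<Rightarrow> 'a) list \<times> bool) set" where
  "cZ D Ac = (\<lambda>i. (c i, i \<in> Ac)) ` D"

lemma c_indep: assumes D: "finite D" shows "pat KS \<phi> xs ys (cZ D Ac)"
proof -
  have Zt: "\<forall>(t, \<delta>)\<in>cZ D Ac. tuple_in KS (length ys) t" unfolding cZ_def using c_tuple by auto
  have fZ: "finite (cZ D Ac)" unfolding cZ_def using D by simp
  obtain m where m: "D \<subseteq> {..<m}" using D finite_nat_bounded by blast
  have len: "\<forall>k. length (bK' k i) = length ys" for i using bK'_tuple unfolding tuple_in_def by blast
  have G1: "{k. \<forall>i\<in>D. map (\<lambda>x. x k) (c i) = bK' k i} \<in> U"
    using D tup_ae[OF len] unfolding c_def by (intro U_finite_Int) auto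
  have G: "{k. \<forall>i\<in>D. map (\<lambda>x. x k) (c i) = bK' k i} \<inter> - {..<m} \<in> U"
    using U_Int[OF G1 U_infinite[OF finite_lessThan]] .
  have "{k. \<forall>i\<in>D. map (\<lambda>x. x k) (c i) = bK' k i} \<inter> - {..<m} \<subseteq> {k. pat K \<phi> xs ys (pzj k (cZ D Ac))}"
  proof
    fix k assume k: "k \<in> {k. \<forall>i\<in>D. map (\<lambda>x. x k) (c i) = bK' k i} \<inter> - {..<m}"
    have "Ac \<inter> {..<k} \<subseteq> {..<k}" by blast
    then obtain a where a: "tuple_in K (length xs) a" and ha: "\<forall>i<k. holds K \<phi> xs ys a (bK k i) \<longleftrightarrow> i \<in> Ac \<inter> {..<k}"
      using bK by blast
    have "\<forall>(t, \<delta>)\<in>pzj k (cZ D Ac). holds K \<phi> xs ys a t = \<delta>"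
    proof (intro ballI)
      fix z assume "z \<in> pzj k (cZ D Ac)"
      then obtain i where i: "i \<in> D" "z = (map (\<lambda>x. x k) (c i), i \<in> Ac)" unfolding pzj_def cZ_def by auto
      have ik: "i < k" using i m k by auto
      then have "map (\<lambda>x. x k) (c i) = bK k i" using k i unfolding bK'_def by auto
      then show "case z of (t, \<delta>) \<Rightarrow> holds K \<phi> xs ys a t = \<delta>" using i ha ik by auto
    qed
    then show "k \<in> {k. pat K \<phi> xs ys (pzj k (cZ D Ac))}" unfolding pat_def using a by blast
  qed
  then have "{k. pat K \<phi> xs ys (pzj k (cZ D Ac))} \<in> U" using U_mono[OF G] by blast
  then show ?thesis using pat_los[OF fvphi fZ Zt] by blast
qed

definition d0 :: "nat \<Rightarrow> 'a" where "d0 = (SOME d. d \<in> univ KS)"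
lemma d0: "d0 \<in> univ KS"
proof -
  have "univ KS \<noteq> {}" using KS_struct by (simp add: is_struct_def)
  then have "\<exists>d. d \<in> univ KS" by blast
  then show ?thesis unfolding d0_def by (rule someI_ex)
qed

definition epsA :: "(nat \<Rightarrow> 'a) list \<Rightarrow> nat \<Rightarrow> (nat \<Rightarrow> 'a)" where
  "epsA as v = (if v < length as then as ! v else d0)"

definition tvwit :: "('f, 'r) fm \<Rightarrow> nat \<Rightarrow> (nat \<Rightarrow> 'a) list \<Rightarrow> (nat \<Rightarrow> 'a)" where
  "tvwit p x as = (if \<exists>d\<in>univ KS. sat KS ((epsA as)(x := d)) p
      then (SOME d. d \<in> univ KS \<and> sat KS ((epsA as)(x := d)) p) else d0)"

lemma tvwit: "tvwit p x as \<in> univ KS \<and> ((\<exists>d\<in>univ KS. sat KS ((epsA as)(x := d)) p) \<longrightarrow> sat KS ((epsA as)(x := tvwit p x as)) p)"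
proof (cases "\<exists>d\<in>univ KS. sat KS ((epsA as)(x := d)) p")
  case True
  then have "\<exists>d. d \<in> univ KS \<and> sat KS ((epsA as)(x := d)) p" by blast
  from someI_ex[OF this] True show ?thesis unfolding tvwit_def by simp
next
  case False then show ?thesis unfolding tvwit_def using d0 by simp
qed

definition TVw :: "(nat \<Rightarrow> 'a) set \<Rightarrow> (nat \<Rightarrow> 'a) set" where
  "TVw S = (\<lambda>(p, x, as). tvwit p x as) ` (UNIV \<times> UNIV \<times> lists S)"

definition FnW :: "(nat \<Rightarrow> 'a) set \<Rightarrow> (nat \<Rightarrow> 'a) set" where
  "FnW S = (\<lambda>(F, as). fint KS F as) ` {(F, as). set as \<subseteq> S \<and> length as = fa F}"

definition TS :: "(nat \<Rightarrow> 'a) set \<Rightarrow> (nat \<Rightarrow> 'a) list set" where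
  "TS S = {t. set t \<subseteq> S \<and> length t = length ys}"

definition XS :: "(nat \<Rightarrow> 'a) set \<Rightarrow> (nat \<Rightarrow> 'a) list set" where
  "XS S = {a. set a \<subseteq> S \<and> length a = length xs}"

definition pwit :: "((nat \<Rightarrow> 'a) list \<times> bool) set \<Rightarrow> (nat \<Rightarrow> 'a) list" where
  "pwit Z = (SOME a. tuple_in KS (length xs) a \<and> (\<forall>(t, \<delta>)\<in>Z. holds KS \<phi> xs ys a t = \<delta>))"

lemma pwit: "pat KS \<phi> xs ys Z \<Longrightarrow> tuple_in KS (length xs) (pwit Z) \<and> (\<forall>(t, \<delta>)\<in>Z. holds KS \<phi> xs ys (pwit Z) t = \<delta>)"
  unfolding pat_def pwit_def by (rule someI_ex)

definition PZ :: "(nat \<Rightarrow> 'a) set \<Rightarrow> ((nat \<Rightarrow> 'a) list \<times> bool) set set" where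
  "PZ S = {Z. finite Z \<and> Z \<subseteq> TS S \<times> UNIV}"

definition PatW :: "(nat \<Rightarrow> 'a) set \<Rightarrow> (nat \<Rightarrow> 'a) set" where
  "PatW S = (\<Union>Z\<in>{Z\<in>PZ S. pat KS \<phi> xs ys Z}. set (pwit Z))"

definition W :: "(nat \<Rightarrow> 'a) set \<Rightarrow> (nat \<Rightarrow> 'a) set" where
  "W S = S \<union> TVw S \<union> FnW S \<union> PatW S"

lemma countable_TS: "countable S \<Longrightarrow> countable (TS S)"
  by (rule countable_subset[of _ "lists S"]) (auto simp: TS_def)

lemma countable_XS: "countable S \<Longrightarrow> countable (XS S)"
  by (rule countable_subset[of _ "lists S"]) (auto simp: XS_def)

lemma countable_PZ: "countable S \<Longrightarrow> countable (PZ S)"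
proof -
  assume S: "countable S"
  have "countable (TS S \<times> (UNIV :: bool set))" using countable_TS[OF S] by simp
  then show ?thesis unfolding PZ_def by (rule countable_Collect_finite_subset)
qed

lemma countable_W: "countable S \<Longrightarrow> countable (W S)"
proof -
  assume S: "countable S"
  have "countable (UNIV \<times> UNIV \<times> lists S :: (('f, 'r) fm \<times> nat \<times> (nat \<Rightarrow> 'a) list) set)"
    using S by simp
  then have 1: "countable (TVw S)" unfolding TVw_def by (rule countable_image)
  have "countable (UNIV \<times> lists S :: ('f \<times> (nat \<Rightarrow> 'a) list) set)" using S by simp
  then have "countable {(F, as). set as \<subseteq> S \<and> length as = fa F}"
    by (rule countable_subset[rotated]) auto
  then have 2: "countable (FnW S)" unfolding FnW_def by (rule countable_image)
  have "countable {Z\<in>PZ S. pat KS \<phi> xs ys Z}"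
    by (rule countable_subset[OF _ countable_PZ[OF S]]) blast
  then have 3: "countable (PatW S)" unfolding PatW_def
    by (rule countable_UN) (rule countable_finite, simp)
  show ?thesis unfolding W_def using S 1 2 3 by (intro countable_Un)
qed

lemma W_univ: "S \<subseteq> univ KS \<Longrightarrow> W S \<subseteq> univ KS"
proof -
  assume S: "S \<subseteq> univ KS"
  have "TVw S \<subseteq> univ KS"
  proof
    fix y assume "y \<in> TVw S"
    then obtain p x as where "y = tvwit p x as" unfolding TVw_def by auto
    then show "y \<in> univ KS" using tvwit by simp
  qed
  moreover have "FnW S \<subseteq> univ KS"
  proof
    fix y assume "y \<in> FnW S"
    then obtain F as where y: "y = fint KS F as" "set as \<subseteq> S" "length as = fa F" unfolding FnW_def by auto
    have "\<forall>F as. length as = fa F \<and> set as \<subseteq> univ KS \<longrightarrow> fint KS F as \<in> univ KS"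
      using KS_struct by (simp add: is_struct_def)
    then show "y \<in> univ KS" using y S by blast
  qed
  moreover have "PatW S \<subseteq> univ KS"
  proof
    fix y assume "y \<in> PatW S"
    then obtain Z where Z: "pat KS \<phi> xs ys Z" "y \<in> set (pwit Z)" unfolding PatW_def by blast
    have "set (pwit Z) \<subseteq> univ KS" using pwit[OF Z(1)] by (simp add: tuple_in_def)
    then show "y \<in> univ KS" using Z(2) by blast
  qed
  ultimately show ?thesis unfolding W_def using S by blast
qed

definition Fam :: "(nat \<Rightarrow> 'a) set \<Rightarrow> ((nat \<Rightarrow> 'a) list \<Rightarrow> bool) set" where
  "Fam S = (\<lambda>a y. holds KS \<phi> xs ys a y) ` XS S \<union> (\<lambda>a y. \<not> holds KS \<phi> xs ys a y) ` XS S
     \<union> (\<lambda>(Z, \<epsilon>) y. pat KS \<phi> xs ys (insert (y, \<epsilon>) Z)) ` (PZ S \<times> UNIV)"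

lemma countable_Fam: "countable S \<Longrightarrow> countable (Fam S)"
proof -
  assume S: "countable S"
  have 1: "countable (XS S)" using countable_XS[OF S] .
  have "countable (PZ S \<times> (UNIV :: bool set))" using countable_PZ[OF S] by simp
  then have 2: "countable ((\<lambda>(Z, \<epsilon>) y. pat KS \<phi> xs ys (insert (y, \<epsilon>) Z)) ` (PZ S \<times> UNIV))"
    by (rule countable_image)
  show ?thesis unfolding Fam_def by (intro countable_Un countable_image 1 2)
qed

definition TypeS :: "(nat \<Rightarrow> 'a) set \<Rightarrow> ((nat \<Rightarrow> 'a) list \<Rightarrow> bool) set" where
  "TypeS S = {Q \<in> Fam S. {i. Q (c i)} \<in> U}"

definition losok :: "((nat \<Rightarrow> 'a) list \<Rightarrow> bool) \<Rightarrow> bool" where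
  "losok Q \<longleftrightarrow> (\<exists>QK. \<forall>y. tuple_in KS (length ys) y \<longrightarrow> (Q y \<longleftrightarrow> {j. QK j (map (\<lambda>x. x j) y)} \<in> U))"

lemma fam_los: assumes S: "S \<subseteq> univ KS" and Q: "Q \<in> Fam S" shows "losok Q"
proof -
  { fix a assume a: "a \<in> XS S"
    then have at: "tuple_in KS (length xs) a" using S unfolding XS_def tuple_in_def by auto
    have "losok (\<lambda>y. holds KS \<phi> xs ys a y)" unfolding losok_def
    proof (intro exI[of _ "\<lambda>j y. holds K \<phi> xs ys (map (\<lambda>x. x j) a) y"] allI impI)
      fix y assume y: "tuple_in KS (length ys) y"
      show "holds KS \<phi> xs ys a y = ({j. holds K \<phi> xs ys (map (\<lambda>x. x j) a) (map (\<lambda>x. x j) y)} \<in> U)"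
        by (rule holds_los[OF at y fvphi])
    qed
    moreover have "losok (\<lambda>y. \<not> holds KS \<phi> xs ys a y)" unfolding losok_def
    proof (intro exI[of _ "\<lambda>j y. \<not> holds K \<phi> xs ys (map (\<lambda>x. x j) a) y"] allI impI)
      fix y assume y: "tuple_in KS (length ys) y"
      show "(\<not> holds KS \<phi> xs ys a y) = ({j. \<not> holds K \<phi> xs ys (map (\<lambda>x. x j) a) (map (\<lambda>x. x j) y)} \<in> U)"
        using holds_los[OF at y fvphi] U_Collect_not[of "\<lambda>j. holds K \<phi> xs ys (map (\<lambda>x. x j) a) (map (\<lambda>x. x j) y)"] by simp
    qed
    ultimately have "losok (\<lambda>y. holds KS \<phi> xs ys a y) \<and> losok (\<lambda>y. \<not> holds KS \<phi> xs ys a y)" by blast }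
  moreover
  { fix Z \<epsilon> assume Z: "Z \<in> PZ S"
    have "losok (\<lambda>y. pat KS \<phi> xs ys (insert (y, \<epsilon>) Z))" unfolding losok_def
    proof (intro exI[of _ "\<lambda>j y'. pat K \<phi> xs ys (insert (y', \<epsilon>) (pzj j Z))"] allI impI)
      fix y assume y: "tuple_in KS (length ys) y"
      have fZ: "finite (insert (y, \<epsilon>) Z)" using Z unfolding PZ_def by auto
      have Zt: "\<forall>(t, \<delta>)\<in>insert (y, \<epsilon>) Z. tuple_in KS (length ys) t"
        using Z y S unfolding PZ_def TS_def tuple_in_def by auto
      have "pzj j (insert (y, \<epsilon>) Z) = insert (map (\<lambda>x. x j) y, \<epsilon>) (pzj j Z)" for j
        unfolding pzj_def by simp
      then show "pat KS \<phi> xs ys (insert (y, \<epsilon>) Z) \<longleftrightarrow>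
          {j. pat K \<phi> xs ys (insert (map (\<lambda>x. x j) y, \<epsilon>) (pzj j Z))} \<in> U"
        using pat_los[OF fvphi fZ Zt] by simp
    qed }
  ultimately show ?thesis using Q unfolding Fam_def by auto
qed

definition real :: "(nat \<Rightarrow> 'a) set \<Rightarrow> (nat \<Rightarrow> 'a) list" where
  "real S = (SOME y. tuple_in KS (length ys) y \<and> (\<forall>Q\<in>TypeS S. Q y))"

lemma real: assumes S: "countable S" "S \<subseteq> univ KS"
  shows "tuple_in KS (length ys) (real S) \<and> (\<forall>Q\<in>TypeS S. Q (real S))"
proof -
  define TT where "TT = insert (\<lambda>_. True) (TypeS S)"
  have "TypeS S \<subseteq> Fam S" unfolding TypeS_def by blast
  then have "countable (TypeS S)" using countable_Fam[OF S(1)] by (rule countable_subset)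
  then have cTT: "countable TT" unfolding TT_def by (rule countable_insert)
  have neTT: "TT \<noteq> {}" unfolding TT_def by blast
  define Q where "Q k = from_nat_into TT k" for k
  have QT: "Q k \<in> TT" for k unfolding Q_def using from_nat_into[OF neTT] .
  have lo: "losok (Q k)" for k
  proof (cases "Q k = (\<lambda>_. True)")
    case True then show ?thesis unfolding losok_def using U_UNIV by (intro exI[of _ "\<lambda>_ _. True"]) simp
  next
    case False then have "Q k \<in> TypeS S" using QT[of k] unfolding TT_def by simp
    then have "Q k \<in> Fam S" unfolding TypeS_def by simp
    then show ?thesis by (rule fam_los[OF S(2)])
  qed
  define QK where "QK k = (SOME QK. \<forall>y. tuple_in KS (length ys) y \<longrightarrow> (Q k y \<longleftrightarrow> {j. QK j (map (\<lambda>x. x j) y)} \<in> U))" for k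
  have los: "tuple_in KS (length ys) y \<Longrightarrow> (Q k y \<longleftrightarrow> {j. QK k j (map (\<lambda>x. x j) y)} \<in> U)" for k y
  proof -
    assume y: "tuple_in KS (length ys) y"
    have "\<forall>y. tuple_in KS (length ys) y \<longrightarrow> (Q k y \<longleftrightarrow> {j. QK k j (map (\<lambda>x. x j) y)} \<in> U)"
      unfolding QK_def using lo[of k] unfolding losok_def by (rule someI_ex)
    then show ?thesis using y by blast
  qed
  have QU: "{i. Q k (c i)} \<in> U" for k
  proof (cases "Q k = (\<lambda>_. True)")
    case True then show ?thesis using U_UNIV by simp
  next
    case False then have "Q k \<in> TypeS S" using QT[of k] unfolding TT_def by simp
    then show ?thesis unfolding TypeS_def by simp
  qed
  have fs: "\<exists>y. tuple_in KS (length ys) y \<and> (\<forall>k<n. Q k y)" for n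
  proof -
    have "{i. \<forall>k\<in>{..<n}. Q k (c i)} \<in> U" using QU by (intro U_finite_Int) auto
    then have "{i. \<forall>k\<in>{..<n}. Q k (c i)} \<noteq> {}" using U_empty by (cases "{i. \<forall>k\<in>{..<n}. Q k (c i)} = {}") simp_all
    then obtain i where "i \<in> {i. \<forall>k\<in>{..<n}. Q k (c i)}" by blast
    then have "\<forall>k<n. Q k (c i)" by simp
    then show ?thesis using c_tuple by blast
  qed
  obtain y where y: "tuple_in KS (length ys) y" "\<forall>k. Q k y" using saturation[OF los fs] by blast
  have "\<forall>P\<in>TypeS S. P y"
  proof
    fix P assume "P \<in> TypeS S"
    then have "P \<in> TT" unfolding TT_def by blast
    then obtain k where "from_nat_into TT k = P" using from_nat_into_surj[OF cTT] by blast
    then have "Q k = P" unfolding Q_def .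
    then show "P y" using y(2) by metis
  qed
  then have "\<exists>y. tuple_in KS (length ys) y \<and> (\<forall>Q\<in>TypeS S. Q y)" using y(1) by blast
  from someI_ex[OF this] show ?thesis unfolding real_def .
qed

definition S0 :: "(nat \<Rightarrow> 'a) set" where "S0 = insert d0 (\<Union>i. set (c i))"

primrec Sq :: "nat \<Rightarrow> (nat \<Rightarrow> 'a) set" where
  "Sq 0 = S0"
| "Sq (Suc n) = W (Sq n) \<union> set (real (Sq n))"

definition b :: "nat \<Rightarrow> (nat \<Rightarrow> 'a) list" where "b n = real (Sq n)"

definition NN :: "(nat \<Rightarrow> 'a) set" where "NN = (\<Union>n. Sq n)"

lemma Sq_ok: "countable (Sq n) \<and> Sq n \<subseteq> univ KS"
proof (induction n)
  case 0
  have "countable (\<Union>i. set (c i))" by (simp add: countable_finite)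
  moreover have "(\<Union>i. set (c i)) \<subseteq> univ KS" using c_tuple unfolding tuple_in_def by blast
  ultimately show ?case unfolding Sq.simps S0_def using d0 by simp
next
  case (Suc n)
  have r: "tuple_in KS (length ys) (real (Sq n))" using real Suc by blast
  have "countable (W (Sq n))" using countable_W Suc by blast
  moreover have "W (Sq n) \<subseteq> univ KS" using W_univ Suc by blast
  moreover have "set (real (Sq n)) \<subseteq> univ KS" using r unfolding tuple_in_def by blast
  moreover have "countable (set (real (Sq n)))" by (rule countable_finite) simp
  ultimately show ?case by simp
qed

lemma b_tuple: "tuple_in KS (length ys) (b n)"
  unfolding b_def using real Sq_ok by blast

lemma b_type: "Q \<in> TypeS (Sq n) \<Longrightarrow> Q (b n)"
  unfolding b_def using real Sq_ok by blast

lemma S_sub_W: "S \<subseteq> W S" unfolding W_def by blast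

lemma Sq_mono: "m \<le> n \<Longrightarrow> Sq m \<subseteq> Sq n"
proof (induction n)
  case 0 then show ?case by simp
next
  case (Suc n)
  have "Sq n \<subseteq> Sq (Suc n)" using S_sub_W[of "Sq n"] by auto
  then show ?case using Suc by (cases "m = Suc n") auto
qed

lemma b_in: "j < n \<Longrightarrow> set (b j) \<subseteq> Sq n"
proof -
  assume "j < n"
  have "set (b j) \<subseteq> Sq (Suc j)" unfolding b_def by simp
  then show ?thesis using Sq_mono[of "Suc j" n] \<open>j < n\<close> by auto
qed

lemma c_in: "set (c i) \<subseteq> Sq n"
proof -
  have "set (c i) \<subseteq> Sq 0" unfolding Sq.simps S0_def by blast
  then show ?thesis using Sq_mono[of 0 n] by auto
qed

lemma fin_in: "finite F \<Longrightarrow> F \<subseteq> NN \<Longrightarrow> \<exists>n. F \<subseteq> Sq n"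
proof (induction F rule: finite_induct)
  case empty then show ?case by simp
next
  case (insert x F)
  then obtain n where n: "F \<subseteq> Sq n" by auto
  obtain m where m: "x \<in> Sq m" using insert.prems unfolding NN_def by auto
  have "F \<subseteq> Sq (max n m)" using n Sq_mono[of n "max n m"] by auto
  moreover have "x \<in> Sq (max n m)" using m Sq_mono[of m "max n m"] by auto
  ultimately show ?case by blast
qed

lemma NN_univ: "NN \<subseteq> univ KS" unfolding NN_def using Sq_ok by blast

lemma NN_countable: "countable NN" unfolding NN_def using Sq_ok by (intro countable_UN) auto

definition bZ :: "nat set \<Rightarrow> nat set \<Rightarrow> ((nat \<Rightarrow> 'a) list \<times> bool) set" where
  "bZ E A = (\<lambda>j. (b j, j \<in> A)) ` E"

lemma IPclaim: "finite D \<Longrightarrow> E \<subseteq> {..<n} \<Longrightarrow> pat KS \<phi> xs ys (cZ D Ac \<union> bZ E A)"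
proof (induction n arbitrary: D Ac E)
  case 0
  then have "bZ E A = {}" unfolding bZ_def by auto
  then show ?case using c_indep[OF 0(1)] by simp
next
  case (Suc n)
  show ?case
  proof (cases "n \<in> E")
    case False
    have "E \<subseteq> {..<n}"
    proof
      fix x assume "x \<in> E" then have "x < Suc n" "x \<noteq> n" using Suc.prems False by auto
      then show "x \<in> {..<n}" by simp
    qed
    then show ?thesis using Suc.IH Suc.prems by blast
  next
    case True
    define E' where "E' = E - {n}"
    have E': "E' \<subseteq> {..<n}" unfolding E'_def using Suc.prems by auto
    define Z0 where "Z0 = cZ D Ac \<union> bZ E' A"
    have fE': "finite E'" using E' finite_subset by blast
    have Z0PZ: "Z0 \<in> PZ (Sq n)"
    proof -
      have "finite Z0" unfolding Z0_def cZ_def bZ_def using Suc.prems(1) fE' by simp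
      moreover have "Z0 \<subseteq> TS (Sq n) \<times> UNIV"
      proof
        fix z assume "z \<in> Z0"
        then consider (c) i where "i \<in> D" "z = (c i, i \<in> Ac)" | (b) j where "j \<in> E'" "z = (b j, j \<in> A)"
          unfolding Z0_def cZ_def bZ_def by blast
        then show "z \<in> TS (Sq n) \<times> UNIV"
        proof cases
          case c then show ?thesis using c_in c_tuple unfolding TS_def tuple_in_def by auto
        next
          case b then have "j < n" using E' by auto
          then show ?thesis using b b_in b_tuple unfolding TS_def tuple_in_def by auto
        qed
      qed
      ultimately show ?thesis unfolding PZ_def by blast
    qed
    define Q where "Q = (\<lambda>y. pat KS \<phi> xs ys (insert (y, n \<in> A) Z0))"
    have QF: "Q \<in> Fam (Sq n)" unfolding Fam_def Q_def using Z0PZ by force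
    have "- D \<subseteq> {i. Q (c i)}"
    proof
      fix i assume "i \<in> - D"
      then have iD: "i \<notin> D" by simp
      define Ac' where "Ac' = (if n \<in> A then insert i Ac else Ac - {i})"
      have "(\<lambda>i'. (c i', i' \<in> Ac')) ` D = (\<lambda>i'. (c i', i' \<in> Ac)) ` D"
        using iD unfolding Ac'_def by (intro image_cong) auto
      then have "cZ (insert i D) Ac' = insert (c i, n \<in> A) (cZ D Ac)"
        unfolding cZ_def Ac'_def by simp
      then have eq: "insert (c i, n \<in> A) Z0 = cZ (insert i D) Ac' \<union> bZ E' A"
        unfolding Z0_def by simp
      have "pat KS \<phi> xs ys (cZ (insert i D) Ac' \<union> bZ E' A)"
        using Suc.IH[of "insert i D" E' Ac'] Suc.prems(1) E' by simp
      then show "i \<in> {i. Q (c i)}" unfolding Q_def by (simp add: eq)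
    qed
    then have "{i. Q (c i)} \<in> U" using U_mono[OF U_infinite[OF Suc.prems(1)]] by blast
    then have "Q \<in> TypeS (Sq n)" unfolding TypeS_def using QF by blast
    then have "Q (b n)" by (rule b_type)
    moreover have "insert (b n, n \<in> A) Z0 = cZ D Ac \<union> bZ E A"
      unfolding Z0_def bZ_def E'_def using True by auto
    ultimately show ?thesis unfolding Q_def by simp
  qed
qed

definition NS :: "('f, 'r, nat \<Rightarrow> 'a) struct" where
  "NS = \<lparr>univ = NN, fint = fint KS, rint = rint KS\<rparr>"

lemma NS_simps: "univ NS = NN" "fint NS = fint KS" "rint NS = rint KS" unfolding NS_def by simp_all

lemma eval_NS: "eval NS e t = eval KS e t"
proof (induction t)
  case (Var n) then show ?case by simp
next
  case (Fn f ts)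
  have eq: "map (eval NS e) ts = map (eval KS e) ts" using Fn by (intro map_cong) auto
  show ?case unfolding eval.simps NS_simps using eq by (rule arg_cong)
qed

lemma b_NN: "set (b n) \<subseteq> NN"
proof -
  have "set (b n) \<subseteq> Sq (Suc n)" using b_in[of n "Suc n"] by simp
  moreover have "Sq (Suc n) \<subseteq> NN" unfolding NN_def by (rule UN_upper) simp
  ultimately show ?thesis by (rule order_trans)
qed

lemma TV:
  assumes e: "range e \<subseteq> NN" and d: "d \<in> univ KS" and s: "sat KS (e(x := d)) p"
  shows "\<exists>d'\<in>NN. sat KS (e(x := d')) p"
proof -
  obtain m where m: "fv p \<subseteq> {..<m}" using finite_fv finite_nat_bounded by blast
  define as where "as = map e [0..<m]"
  have "set as \<subseteq> NN" unfolding as_def using e by auto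
  then obtain n where n: "set as \<subseteq> Sq n" using fin_in by blast
  have ag: "\<forall>v\<in>fv p. ((epsA as)(x := d')) v = (e(x := d')) v" for d'
  proof
    fix v assume "v \<in> fv p"
    then have "v < m" using m by auto
    then show "((epsA as)(x := d')) v = (e(x := d')) v" unfolding epsA_def as_def by simp
  qed
  have "sat KS ((epsA as)(x := d)) p = sat KS (e(x := d)) p" by (rule sat_agree[OF ag])
  then have "sat KS ((epsA as)(x := d)) p" using s by simp
  then have w: "sat KS ((epsA as)(x := tvwit p x as)) p" using tvwit d by blast
  have "tvwit p x as \<in> TVw (Sq n)" unfolding TVw_def using n by force
  then have "tvwit p x as \<in> Sq (Suc n)" by (simp add: W_def)
  then have "tvwit p x as \<in> NN" unfolding NN_def by blast
  moreover have "sat KS ((epsA as)(x := tvwit p x as)) p = sat KS (e(x := tvwit p x as)) p" by (rule sat_agree[OF ag])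
  then have "sat KS (e(x := tvwit p x as)) p" using w by simp
  ultimately show ?thesis by blast
qed

lemma elem: "range e \<subseteq> NN \<Longrightarrow> sat NS e p \<longleftrightarrow> sat KS e p"
proof (induction p arbitrary: e)
  case FF then show ?case by simp
next
  case (Eq s t) then show ?case by (simp add: eval_NS)
next
  case (Rel R ts)
  have eq: "map (eval NS e) ts = map (eval KS e) ts" using eval_NS by (intro map_cong) auto
  show ?case unfolding sat.simps NS_simps using eq by (rule arg_cong)
next
  case (Neg p) then show ?case by simp
next
  case (Conj p q) then show ?case by simp
next
  case (Ex x p)
  have IH: "d \<in> NN \<Longrightarrow> sat NS (e(x := d)) p \<longleftrightarrow> sat KS (e(x := d)) p" for d
  proof -
    assume "d \<in> NN"
    then have "range (e(x := d)) \<subseteq> NN" using Ex.prems by auto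
    then show ?thesis by (rule Ex.IH)
  qed
  show ?case
  proof
    assume "sat NS e (Ex x p)"
    then obtain d where "d \<in> NN" "sat NS (e(x := d)) p" by (auto simp: NS_simps)
    then show "sat KS e (Ex x p)" using IH NN_univ by auto
  next
    assume "sat KS e (Ex x p)"
    then obtain d where "d \<in> univ KS" "sat KS (e(x := d)) p" by auto
    then obtain d' where "d' \<in> NN" "sat KS (e(x := d')) p" using TV[OF Ex.prems] by blast
    then show "sat NS e (Ex x p)" using IH by (auto simp: NS_simps)
  qed
qed

lemma NS_struct: "is_struct fa NS"
  unfolding is_struct_def NS_simps
proof (intro conjI allI impI)
  have "d0 \<in> Sq 0" unfolding Sq.simps S0_def by simp
  then show "NN \<noteq> {}" unfolding NN_def by blast
next
  fix F as assume as: "length as = fa F \<and> set as \<subseteq> NN"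
  then obtain n where n: "set as \<subseteq> Sq n" using fin_in by blast
  have "fint KS F as \<in> FnW (Sq n)" unfolding FnW_def using n as by force
  then have "fint KS F as \<in> Sq (Suc n)" by (simp add: W_def)
  then show "fint KS F as \<in> NN" unfolding NN_def by blast
qed

lemma NS_model: assumes "is_model fa T KS" shows "is_model fa T NS"
  unfolding is_model_def
proof (intro conjI ballI allI impI)
  show "is_struct fa NS" by (rule NS_struct)
next
  fix p and e :: "nat \<Rightarrow> nat \<Rightarrow> 'a" assume p: "p \<in> T" and e: "range e \<subseteq> univ NS"
  have "\<forall>p\<in>T. \<forall>e. range e \<subseteq> univ KS \<longrightarrow> sat KS e p" using assms by (simp add: is_model_def)
  moreover have "range e \<subseteq> univ KS" using e NN_univ NS_simps by auto
  ultimately have "sat KS e p" using p by blast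
  then show "sat NS e p" using elem e NS_simps by auto
qed

lemma holds_NS:
  assumes a: "tuple_in NS (length xs) a" and t: "tuple_in NS (length ys) t"
  shows "holds NS \<phi> xs ys a t = holds KS \<phi> xs ys a t"
proof -
  define dN where "dN = (\<lambda>_::nat. SOME d. d \<in> univ NS)"
  have dN: "dN v \<in> NN" for v
  proof -
    have "univ NS \<noteq> {}" using NS_struct by (simp add: is_struct_def)
    then have "\<exists>d. d \<in> univ NS" by blast
    then show ?thesis unfolding dN_def NS_simps[symmetric] by (rule someI_ex)
  qed
  have aU: "\<forall>x\<in>set a. x \<in> NN" and tU: "\<forall>x\<in>set t. x \<in> NN"
    using a t unfolding tuple_in_def NS_simps by auto
  have E1: "\<forall>v. upd_list dN ys t v \<in> NN"
    using upd_list_P[where P="\<lambda>x. x \<in> NN", OF _ tU] dN by blast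
  have "upd_list (upd_list dN ys t) xs a v \<in> NN" for v
    using upd_list_P[where P="\<lambda>x. x \<in> NN", OF E1 aU] by blast
  then have r: "range (upd_list (upd_list dN ys t) xs a) \<subseteq> NN" by blast
  have la: "length a = length xs" and lt: "length t = length ys" using a t unfolding tuple_in_def by auto
  have "holds NS \<phi> xs ys a t = sat NS (upd_list (upd_list dN ys t) xs a) \<phi>" unfolding holds_def dN_def ..
  also have "\<dots> = sat KS (upd_list (upd_list dN ys t) xs a) \<phi>" using elem[OF r] .
  also have "\<dots> = holds KS \<phi> xs ys a t" unfolding holds_def by (rule holds_indep[OF la lt fvphi])
  finally show ?thesis .
qed

lemma b_tuple_NS: "tuple_in NS (length ys) (b n)"
  using b_tuple b_NN unfolding tuple_in_def NS_simps by auto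

lemma NS_pattern:
  assumes A: "finite A" and B: "finite B" and AB: "A \<inter> B = {}"
  shows "\<exists>a. tuple_in NS (length xs) a \<and> (\<forall>n\<in>A. holds NS \<phi> xs ys a (b n)) \<and> (\<forall>n\<in>B. \<not> holds NS \<phi> xs ys a (b n))"
proof -
  obtain n where n: "A \<union> B \<subseteq> {..<n}" using A B finite_nat_bounded[of "A \<union> B"] by auto
  define Z where "Z = bZ (A \<union> B) A"
  have "pat KS \<phi> xs ys (cZ {} {} \<union> Z)" unfolding Z_def using IPclaim[OF finite.emptyI n] .
  then have pZ: "pat KS \<phi> xs ys Z" unfolding cZ_def by simp
  have "Z \<in> PZ (Sq n)"
  proof -
    have "finite Z" unfolding Z_def bZ_def using A B by simp
    moreover have "Z \<subseteq> TS (Sq n) \<times> UNIV"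
    proof
      fix z assume "z \<in> Z"
      then obtain j where j: "j \<in> A \<union> B" "z = (b j, j \<in> A)" unfolding Z_def bZ_def by blast
      then have "j < n" using n by auto
      then show "z \<in> TS (Sq n) \<times> UNIV" using j b_in b_tuple unfolding TS_def tuple_in_def by auto
    qed
    ultimately show ?thesis unfolding PZ_def by blast
  qed
  then have "set (pwit Z) \<subseteq> PatW (Sq n)" unfolding PatW_def using pZ by blast
  then have "set (pwit Z) \<subseteq> Sq (Suc n)" by (auto simp: W_def)
  then have sN: "set (pwit Z) \<subseteq> NN" unfolding NN_def by blast
  have pw: "tuple_in KS (length xs) (pwit Z)" "\<forall>(t, \<delta>)\<in>Z. holds KS \<phi> xs ys (pwit Z) t = \<delta>"
    using pwit[OF pZ] by auto
  have aN: "tuple_in NS (length xs) (pwit Z)" using pw(1) sN unfolding tuple_in_def NS_simps by auto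
  have "\<forall>j\<in>A. holds NS \<phi> xs ys (pwit Z) (b j)"
  proof
    fix j assume "j \<in> A"
    then have "(b j, True) \<in> Z" unfolding Z_def bZ_def by force
    then have "holds KS \<phi> xs ys (pwit Z) (b j)" using pw(2) by fastforce
    then show "holds NS \<phi> xs ys (pwit Z) (b j)" using holds_NS[OF aN b_tuple_NS] by simp
  qed
  moreover have "\<forall>j\<in>B. \<not> holds NS \<phi> xs ys (pwit Z) (b j)"
  proof
    fix j assume "j \<in> B"
    then have "(b j, False) \<in> Z" unfolding Z_def bZ_def using AB by force
    then have "\<not> holds KS \<phi> xs ys (pwit Z) (b j)" using pw(2) by fastforce
    then show "\<not> holds NS \<phi> xs ys (pwit Z) (b j)" using holds_NS[OF aN b_tuple_NS] by simp
  qed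
  ultimately show ?thesis using aN by blast
qed

lemma NS_eventual:
  assumes a: "tuple_in NS (length xs) a"
  shows "\<exists>m. \<forall>n\<ge>m. holds NS \<phi> xs ys a (b n) = ({i. holds KS \<phi> xs ys a (c i)} \<in> U)"
proof -
  have "set a \<subseteq> NN" using a unfolding tuple_in_def NS_simps by auto
  then obtain m where m: "set a \<subseteq> Sq m" using fin_in by blast
  have "holds NS \<phi> xs ys a (b n) = ({i. holds KS \<phi> xs ys a (c i)} \<in> U)" if nm: "m \<le> n" for n
  proof -
    have XS: "a \<in> XS (Sq n)" using m Sq_mono[OF nm] a unfolding XS_def tuple_in_def by auto
    have hN: "holds NS \<phi> xs ys a (b n) = holds KS \<phi> xs ys a (b n)" using holds_NS[OF a b_tuple_NS] .
    show ?thesis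
    proof (cases "{i. holds KS \<phi> xs ys a (c i)} \<in> U")
      case True
      have "(\<lambda>y. holds KS \<phi> xs ys a y) \<in> Fam (Sq n)" unfolding Fam_def using XS by blast
      then have "(\<lambda>y. holds KS \<phi> xs ys a y) \<in> TypeS (Sq n)" unfolding TypeS_def using True by simp
      then have "holds KS \<phi> xs ys a (b n)" using b_type by blast
      then show ?thesis using hN True by simp
    next
      case False
      then have F: "{i. \<not> holds KS \<phi> xs ys a (c i)} \<in> U" using U_Collect_not by simp
      have "(\<lambda>y. \<not> holds KS \<phi> xs ys a y) \<in> Fam (Sq n)" unfolding Fam_def using XS by blast
      then have "(\<lambda>y. \<not> holds KS \<phi> xs ys a y) \<in> TypeS (Sq n)" unfolding TypeS_def using F by simp
      then have "\<not> holds KS \<phi> xs ys a (b n)" using b_type by blast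
      then show ?thesis using hN False by simp
    qed
  qed
  then show ?thesis by blast
qed

end


locale TR =
  fixes fa :: "'f \<Rightarrow> nat" and N :: "('f, 'r, 'b) struct" and h :: "'b \<Rightarrow> 'a"
  assumes N: "is_struct fa N" and inj: "inj_on h (univ N)"
begin

definition g :: "'a \<Rightarrow> 'b" where "g = inv_into (univ N) h"

definition M :: "('f, 'r, 'a) struct" where
  "M = \<lparr>univ = h ` univ N, fint = (\<lambda>F as. h (fint N F (map g as))), rint = (\<lambda>R as. rint N R (map g as))\<rparr>"

lemma M_simps: "univ M = h ` univ N" "fint M F as = h (fint N F (map g as))" "rint M R as = rint N R (map g as)"
  unfolding M_def by simp_all

lemma gh: "x \<in> univ N \<Longrightarrow> g (h x) = x" unfolding g_def using inj by (rule inv_into_f_f)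
lemma hg: "y \<in> univ M \<Longrightarrow> h (g y) = y" unfolding g_def M_simps by (rule f_inv_into_f)
lemma g_in: "y \<in> univ M \<Longrightarrow> g y \<in> univ N" unfolding g_def M_simps by (rule inv_into_into)

lemma N_cl: "length as = fa F \<Longrightarrow> set as \<subseteq> univ N \<Longrightarrow> fint N F as \<in> univ N"
  using N unfolding is_struct_def by simp

lemma gh_map: "set a \<subseteq> univ N \<Longrightarrow> map g (map h a) = a"
  by (induction a) (auto simp: gh)

lemma eval_tr: "wf_trm fa t \<Longrightarrow> range e \<subseteq> univ M \<Longrightarrow>
   eval N (\<lambda>v. g (e v)) t \<in> univ N \<and> eval M e t = h (eval N (\<lambda>v. g (e v)) t)"
proof (induction t)
  case (Var n)
  have "e n \<in> univ M" using Var by auto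
  then show ?case using g_in hg by simp
next
  case (Fn f ts)
  have IH: "t \<in> set ts \<Longrightarrow> eval N (\<lambda>v. g (e v)) t \<in> univ N \<and> eval M e t = h (eval N (\<lambda>v. g (e v)) t)" for t
    using Fn by auto
  have eq: "map g (map (eval M e) ts) = map (eval N (\<lambda>v. g (e v))) ts"
  proof (rule nth_equalityI)
    show "length (map g (map (eval M e) ts)) = length (map (eval N (\<lambda>v. g (e v))) ts)" by simp
  next
    fix i assume "i < length (map g (map (eval M e) ts))"
    then have i: "i < length ts" by simp
    then have "ts ! i \<in> set ts" by simp
    then show "map g (map (eval M e) ts) ! i = map (eval N (\<lambda>v. g (e v))) ts ! i"
      using IH[of "ts ! i"] gh i by simp
  qed
  have "set (map (eval N (\<lambda>v. g (e v))) ts) \<subseteq> univ N" using IH by auto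
  moreover have "length (map (eval N (\<lambda>v. g (e v))) ts) = fa f" using Fn.prems by simp
  ultimately have "eval N (\<lambda>v. g (e v)) (Fn f ts) \<in> univ N" using N_cl by simp
  moreover have "eval M e (Fn f ts) = h (eval N (\<lambda>v. g (e v)) (Fn f ts))"
    unfolding eval.simps M_simps eq ..
  ultimately show ?case by blast
qed

lemma sat_tr: "wf_fm fa ra p \<Longrightarrow> range e \<subseteq> univ M \<Longrightarrow> sat M e p = sat N (\<lambda>v. g (e v)) p"
proof (induction p arbitrary: e)
  case FF then show ?case by simp
next
  case (Eq s t)
  have "eval M e s = eval M e t \<longleftrightarrow> h (eval N (\<lambda>v. g (e v)) s) = h (eval N (\<lambda>v. g (e v)) t)"
    using eval_tr[of s e] eval_tr[of t e] Eq by simp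
  also have "\<dots> \<longleftrightarrow> eval N (\<lambda>v. g (e v)) s = eval N (\<lambda>v. g (e v)) t"
    using eval_tr[of s e] eval_tr[of t e] Eq inj by (auto dest: inj_onD)
  finally show ?case by simp
next
  case (Rel R ts)
  have eq: "map g (map (eval M e) ts) = map (eval N (\<lambda>v. g (e v))) ts"
  proof (rule nth_equalityI)
    show "length (map g (map (eval M e) ts)) = length (map (eval N (\<lambda>v. g (e v))) ts)" by simp
  next
    fix i assume "i < length (map g (map (eval M e) ts))"
    then have i: "i < length ts" by simp
    then have "ts ! i \<in> set ts" by simp
    then have "wf_trm fa (ts ! i)" using Rel.prems by auto
    then show "map g (map (eval M e) ts) ! i = map (eval N (\<lambda>v. g (e v))) ts ! i"
      using eval_tr[of "ts ! i" e] Rel.prems gh i by simp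
  qed
  show ?case unfolding sat.simps M_simps eq ..
next
  case (Neg p) then show ?case by simp
next
  case (Conj p q) then show ?case by simp
next
  case (Ex x p)
  have "sat M e (Ex x p) \<longleftrightarrow> (\<exists>d\<in>univ N. sat M (e(x := h d)) p)" by (auto simp: M_simps)
  also have "\<dots> \<longleftrightarrow> (\<exists>d\<in>univ N. sat N ((\<lambda>v. g (e v))(x := d)) p)"
  proof (intro bex_cong refl)
    fix d assume d: "d \<in> univ N"
    have r: "range (e(x := h d)) \<subseteq> univ M" using Ex.prems d by (auto simp: M_simps)
    have eqf: "(\<lambda>v. g ((e(x := h d)) v)) = (\<lambda>v. g (e v))(x := d)" using gh[OF d] by auto
    have "sat M (e(x := h d)) p = sat N (\<lambda>v. g ((e(x := h d)) v)) p" using Ex.prems(1) by (intro Ex.IH[OF _ r]) simp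
    then show "sat M (e(x := h d)) p = sat N ((\<lambda>v. g (e v))(x := d)) p" by (simp only: eqf)
  qed
  finally show ?case by simp
qed

lemma M_struct: "is_struct fa M"
  unfolding is_struct_def M_simps
proof (intro conjI allI impI)
  show "h ` univ N \<noteq> {}" using N unfolding is_struct_def by simp
next
  fix F as assume as: "length as = fa F \<and> set as \<subseteq> h ` univ N"
  have "set (map g as) \<subseteq> univ N" using as g_in by (auto simp: M_simps)
  then show "h (fint N F (map g as)) \<in> h ` univ N" using N_cl as by simp
qed

lemma M_model:
  assumes "is_model fa T N" "\<forall>\<sigma>\<in>T. sentence fa ra \<sigma>"
  shows "is_model fa T M"
  unfolding is_model_def
proof (intro conjI ballI allI impI)
  show "is_struct fa M" by (rule M_struct)
next
  fix \<sigma> and e :: "nat \<Rightarrow> 'a" assume s: "\<sigma> \<in> T" and e: "range e \<subseteq> univ M"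
  have wf: "wf_fm fa ra \<sigma>" using assms(2) s unfolding sentence_def by blast
  have "\<forall>p\<in>T. \<forall>e. range e \<subseteq> univ N \<longrightarrow> sat N e p" using assms(1) by (simp add: is_model_def)
  moreover have "range (\<lambda>v. g (e v)) \<subseteq> univ N" using e g_in by auto
  ultimately have "sat N (\<lambda>v. g (e v)) \<sigma>" using s by blast
  then show "sat M e \<sigma>" using sat_tr[OF wf e] by simp
qed

lemma holds_tr:
  assumes wf: "wf_fm fa ra p" and fv: "fv p \<subseteq> set xs \<union> set ys"
    and a: "tuple_in N (length xs) a" and t: "tuple_in N (length ys) t"
  shows "holds M p xs ys (map h a) (map h t) = holds N p xs ys a t"
proof -
  define dM where "dM = (\<lambda>_::nat. SOME d. d \<in> univ M)"
  have dM: "dM v \<in> univ M" for v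
  proof -
    have "univ M \<noteq> {}" using M_struct by (simp add: is_struct_def)
    then have "\<exists>d. d \<in> univ M" by blast
    then show ?thesis unfolding dM_def by (rule someI_ex)
  qed
  have aU: "\<forall>x\<in>set (map h a). x \<in> univ M" and tU: "\<forall>x\<in>set (map h t). x \<in> univ M"
    using a t unfolding tuple_in_def M_simps by auto
  have E1: "\<forall>v. upd_list dM ys (map h t) v \<in> univ M"
    using upd_list_P[where P="\<lambda>x. x \<in> univ M", OF _ tU] dM by blast
  have "upd_list (upd_list dM ys (map h t)) xs (map h a) v \<in> univ M" for v
    using upd_list_P[where P="\<lambda>x. x \<in> univ M", OF E1 aU] by blast
  then have r: "range (upd_list (upd_list dM ys (map h t)) xs (map h a)) \<subseteq> univ M" by blast
  have ga: "map g (map h a) = a" using a gh_map unfolding tuple_in_def by blast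
  have gt: "map g (map h t) = t" using t gh_map unfolding tuple_in_def by blast
  have comp: "(\<lambda>v. g (upd_list (upd_list dM ys (map h t)) xs (map h a) v))
      = upd_list (upd_list (\<lambda>v. g (dM v)) ys t) xs a"
  proof
    fix v
    have "g (upd_list (upd_list dM ys (map h t)) xs (map h a) v)
        = upd_list (\<lambda>w. g (upd_list dM ys (map h t) w)) xs (map g (map h a)) v"
      by (rule upd_list_comp)
    also have "(\<lambda>w. g (upd_list dM ys (map h t) w)) = upd_list (\<lambda>v. g (dM v)) ys (map g (map h t))"
      by (intro ext upd_list_comp)
    finally show "g (upd_list (upd_list dM ys (map h t)) xs (map h a) v) = upd_list (upd_list (\<lambda>v. g (dM v)) ys t) xs a v"
      unfolding ga gt .
  qed
  have la: "length a = length xs" and lt: "length t = length ys" using a t unfolding tuple_in_def by auto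
  have "holds M p xs ys (map h a) (map h t) = sat M (upd_list (upd_list dM ys (map h t)) xs (map h a)) p"
    unfolding holds_def dM_def ..
  also have "\<dots> = sat N (upd_list (upd_list (\<lambda>v. g (dM v)) ys t) xs a) p"
    using sat_tr[OF wf r] unfolding comp .
  also have "\<dots> = holds N p xs ys a t" unfolding holds_def by (rule holds_indep[OF la lt fv])
  finally show ?thesis .
qed

end

lemma IP_infinite:
  assumes IP: "has_IP_in K p xs ys"
  shows "infinite (univ K)"
proof
  assume fin: "finite (univ K)"
  define TT where "TT = {l. set l \<subseteq> univ K \<and> length l = length xs}"
  have fTT: "finite TT" unfolding TT_def using finite_lists_length_eq[OF fin] .
  define n where "n = card TT"
  have "\<exists>bb. (\<forall>i<n. tuple_in K (length ys) (bb i)) \<and> (\<forall>S \<subseteq> {..<n}. \<exists>a. tuple_in K (length xs) a \<and> (\<forall>i<n. holds K p xs ys a (bb i) \<longleftrightarrow> i \<in> S))"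
    using IP unfolding has_IP_in_def by (rule spec)
  then obtain bb where bb0: "(\<forall>i<n. tuple_in K (length ys) (bb i)) \<and> (\<forall>S \<subseteq> {..<n}. \<exists>a. tuple_in K (length xs) a \<and> (\<forall>i<n. holds K p xs ys a (bb i) \<longleftrightarrow> i \<in> S))"
    by (elim exE)
  then have bb: "\<forall>S \<subseteq> {..<n}. \<exists>a. tuple_in K (length xs) a \<and> (\<forall>i<n. holds K p xs ys a (bb i) \<longleftrightarrow> i \<in> S)"
    by (rule conjunct2)
  define f where "f S = (SOME a. tuple_in K (length xs) a \<and> (\<forall>i<n. holds K p xs ys a (bb i) \<longleftrightarrow> i \<in> S))" for S
  have fS: "S \<subseteq> {..<n} \<Longrightarrow> tuple_in K (length xs) (f S) \<and> (\<forall>i<n. holds K p xs ys (f S) (bb i) \<longleftrightarrow> i \<in> S)" for S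
  proof -
    assume Sn: "S \<subseteq> {..<n}"
    have "\<exists>a. tuple_in K (length xs) a \<and> (\<forall>i<n. holds K p xs ys a (bb i) \<longleftrightarrow> i \<in> S)"
      using bb[rule_format, OF Sn] .
    then show ?thesis unfolding f_def by (rule someI_ex)
  qed
  have "inj_on f (Pow {..<n})"
  proof (rule inj_onI)
    fix S S' assume S: "S \<in> Pow {..<n}" and S': "S' \<in> Pow {..<n}" and eq: "f S = f S'"
    have "i \<in> S \<longleftrightarrow> i \<in> S'" for i
    proof (cases "i < n")
      case True then show ?thesis using fS[of S] fS[of S'] S S' eq by auto
    next
      case False then show ?thesis using S S' by auto
    qed
    then show "S = S'" by blast
  qed
  moreover have "f ` Pow {..<n} \<subseteq> TT" using fS unfolding TT_def tuple_in_def by auto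
  ultimately have "card (Pow {..<n}) \<le> card TT" using fTT by (intro card_inj_on_le) auto
  moreover have "card (Pow {..<n}) = 2 ^ n" by (simp add: card_Pow)
  ultimately have "2 ^ n \<le> n" unfolding n_def by simp
  then show False using less_exp[of n] by simp
qed


lemma holds_Neg: "holds M (Neg p) xs ys a b = (\<not> holds M p xs ys a b)"
  unfolding holds_def by simp

theorem claim4p4:
  fixes fa :: "'f::countable \<Rightarrow> nat" and ra :: "'r::countable \<Rightarrow> nat"
    and T :: "('f, 'r) fm set"
    and \<phi> :: "('f, 'r) fm" and xs ys :: "nat list"
  assumes T_sent: "\<forall>\<sigma>\<in>T. sentence fa ra \<sigma>"
    and T_complete: "\<forall>\<sigma>. sentence fa ra \<sigma> \<longrightarrow>
        (\<forall>M :: ('f, 'r, 'a) struct. is_model fa T M \<longrightarrow> (\<forall>e. range e \<subseteq> univ M \<longrightarrow> sat M e \<sigma>)) \<or>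
        (\<forall>M :: ('f, 'r, 'a) struct. is_model fa T M \<longrightarrow> (\<forall>e. range e \<subseteq> univ M \<longrightarrow> \<not> sat M e \<sigma>))"
    and phi_wf: "wf_fm fa ra \<phi>"
    and vars: "distinct (xs @ ys)" "fv \<phi> \<subseteq> set xs \<union> set ys"
    and IP: "\<exists>M :: ('f, 'r, 'a) struct. is_model fa T M \<and> has_IP_in M \<phi> xs ys"
  shows "\<exists>(M :: ('f, 'r, 'a) struct) (b :: nat \<Rightarrow> 'a list).
           is_model fa T M \<and> countable (univ M) \<and>
           (\<forall>n. tuple_in M (length ys) (b n)) \<and>
           (\<forall>A B. finite A \<and> finite B \<and> A \<inter> B = {} \<longrightarrow>
              (\<exists>a. tuple_in M (length xs) a \<and>
                   (\<forall>n\<in>A. holds M \<phi> xs ys a (b n)) \<and>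
                   (\<forall>n\<in>B. \<not> holds M \<phi> xs ys a (b n)))) \<and>
           (\<forall>a. tuple_in M (length xs) a \<longrightarrow>
              (\<exists>t\<in>{0::nat, 1}. finite {n. \<not> holds M (fm_pow \<phi> t) xs ys a (b n)}))"
proof -
  from IP obtain K :: "('f, 'r, 'a) struct" where Km: "is_model fa T K" and KIP: "has_IP_in K \<phi> xs ys"
    by (elim exE conjE)
  obtain U where U: "ultra U" using ex_ultra by blast
  have Kst: "is_struct fa K" using Km by (simp add: is_model_def)
  interpret MA: MAIN U fa K \<phi> xs ys
    by (rule MAIN.intro[OF UP.intro[OF U Kst] MAIN_axioms.intro[OF vars(2) KIP]])
  have KSm: "is_model fa T MA.KS" by (rule MA.KS_model[OF Km T_sent])
  have NSm: "is_model fa T MA.NS" by (rule MA.NS_model[OF KSm])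
  have infK: "infinite (univ K)" by (rule IP_infinite[OF KIP])
  have "infinite (UNIV :: 'a set)" by (rule infinite_super[OF subset_UNIV infK])
  from infinite_countable_subset[OF this] obtain f :: "nat \<Rightarrow> 'a" where f0: "inj f \<and> range f \<subseteq> UNIV"
    by (elim exE)
  then have f: "inj f" by (rule conjunct1)
  define h where "h = f \<circ> to_nat_on MA.NN"
  have i1: "inj_on (to_nat_on MA.NN) MA.NN" using MA.NN_countable by (rule inj_on_to_nat_on)
  have i2: "inj_on f (to_nat_on MA.NN ` MA.NN)" using f by (rule inj_on_subset) (rule subset_UNIV)
  have injh: "inj_on h MA.NN" unfolding h_def by (rule comp_inj_on[OF i1 i2])
  interpret TR: TR fa MA.NS h
    by (rule TR.intro[OF MA.NS_struct]) (simp add: MA.NS_simps injh)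
  define bM where "bM n = map h (MA.b n)" for n
  have Mm: "is_model fa T TR.M" by (rule TR.M_model[OF NSm T_sent])
  have cM: "countable (univ TR.M)" unfolding TR.M_simps MA.NS_simps using MA.NN_countable by simp
  have bMt: "tuple_in TR.M (length ys) (bM n)" for n
    using MA.b_tuple_NS[of n] unfolding bM_def tuple_in_def TR.M_simps by auto
  have htr: "holds TR.M \<phi> xs ys (map h a) (bM n) = holds MA.NS \<phi> xs ys a (MA.b n)"
    if "tuple_in MA.NS (length xs) a" for a n
    unfolding bM_def by (rule TR.holds_tr[OF phi_wf vars(2) that MA.b_tuple_NS])
  have P1: "\<forall>A B. finite A \<and> finite B \<and> A \<inter> B = {} \<longrightarrow>
              (\<exists>a. tuple_in TR.M (length xs) a \<and>
                   (\<forall>n\<in>A. holds TR.M \<phi> xs ys a (bM n)) \<and>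
                   (\<forall>n\<in>B. \<not> holds TR.M \<phi> xs ys a (bM n)))"
  proof (intro allI impI)
    fix A B :: "nat set" assume AB: "finite A \<and> finite B \<and> A \<inter> B = {}"
    then have AB': "finite A" "finite B" "A \<inter> B = {}" by simp_all
    from MA.NS_pattern[OF AB'] obtain a where a: "tuple_in MA.NS (length xs) a" "\<forall>n\<in>A. holds MA.NS \<phi> xs ys a (MA.b n)"
      "\<forall>n\<in>B. \<not> holds MA.NS \<phi> xs ys a (MA.b n)" by (elim exE conjE)
    have t: "tuple_in TR.M (length xs) (map h a)" using a(1) unfolding tuple_in_def TR.M_simps by auto
    show "\<exists>a. tuple_in TR.M (length xs) a \<and>
                   (\<forall>n\<in>A. holds TR.M \<phi> xs ys a (bM n)) \<and>
                   (\<forall>n\<in>B. \<not> holds TR.M \<phi> xs ys a (bM n))"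
    proof (intro exI[of _ "map h a"] conjI ballI)
      show "tuple_in TR.M (length xs) (map h a)" by (rule t)
    next
      fix n assume "n \<in> A" then show "holds TR.M \<phi> xs ys (map h a) (bM n)" using a(2) htr[OF a(1), of n] by simp
    next
      fix n assume "n \<in> B" then show "\<not> holds TR.M \<phi> xs ys (map h a) (bM n)" using a(3) htr[OF a(1), of n] by simp
    qed
  qed
  have P2: "\<forall>a. tuple_in TR.M (length xs) a \<longrightarrow>
              (\<exists>t\<in>{0::nat, 1}. finite {n. \<not> holds TR.M (fm_pow \<phi> t) xs ys a (bM n)})"
  proof (intro allI impI)
    fix aM assume aM: "tuple_in TR.M (length xs) aM"
    define a where "a = map TR.g aM"
    have a: "tuple_in MA.NS (length xs) a" using aM TR.g_in unfolding a_def tuple_in_def by auto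
    have hg: "\<forall>x\<in>set aM. h (TR.g x) = x" using aM TR.hg unfolding tuple_in_def by auto
    have "map h a = aM" unfolding a_def map_map comp_def by (rule map_idI) (use hg in blast)
    then have hM: "holds TR.M \<phi> xs ys aM (bM n) = holds MA.NS \<phi> xs ys a (MA.b n)" for n
      using htr[OF a] by simp
    obtain m where m: "\<forall>n\<ge>m. holds MA.NS \<phi> xs ys a (MA.b n) = ({i. holds MA.KS \<phi> xs ys a (MA.c i)} \<in> U)"
      using MA.NS_eventual[OF a] by blast
    define tv where "tv = ({i. holds MA.KS \<phi> xs ys a (MA.c i)} \<in> U)"
    define t :: nat where "t = (if tv then 1 else 0)"
    have "{n. \<not> holds TR.M (fm_pow \<phi> t) xs ys aM (bM n)} \<subseteq> {..<m}"
    proof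
      fix n assume n: "n \<in> {n. \<not> holds TR.M (fm_pow \<phi> t) xs ys aM (bM n)}"
      show "n \<in> {..<m}"
      proof (rule ccontr)
        assume "n \<notin> {..<m}"
        then have "m \<le> n" by simp
        then have "holds MA.NS \<phi> xs ys a (MA.b n) = tv" using m unfolding tv_def by blast
        then have "holds TR.M \<phi> xs ys aM (bM n) = tv" using hM[of n] by simp
        then have "holds TR.M (fm_pow \<phi> t) xs ys aM (bM n)"
          unfolding t_def fm_pow_def by (cases tv) (simp_all add: holds_Neg)
        then show False using n by simp
      qed
    qed
    then have "finite {n. \<not> holds TR.M (fm_pow \<phi> t) xs ys aM (bM n)}" by (rule finite_subset) simp
    moreover have "t \<in> {0, 1}" unfolding t_def by simp
    ultimately show "\<exists>t\<in>{0::nat, 1}. finite {n. \<not> holds TR.M (fm_pow \<phi> t) xs ys aM (bM n)}" by blast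
  qed
  have P0: "\<forall>n. tuple_in TR.M (length ys) (bM n)" using bMt by blast
  show ?thesis
    apply (rule exI[of _ TR.M])
    apply (rule exI[of _ bM])
    apply (intro conjI)
        apply (rule Mm)
       apply (rule cM)
      apply (rule P0)
     apply (rule P1)
    apply (rule P2)
    done
qed

end
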